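(* Let $(\Omega,\mu)$ be a finite probability space, $r,\gamma>0$, $q\ge2$, and let $f\colon\Omega^n\to\mathbb{R}$ be $(r,\gamma)$-$L_2$-global. If either (1) $0<\rho\le\frac{1}{3\sqrt2}\min\left(\frac{1}{r^{(q-2)/q}q},\frac{1}{\sqrt q}\right)$, or (2) $r\ge1$ and $0<\rho\le\frac{\log q}{16rq}$, then $\|T_\rho f\|_q^q\le\|f\|_2^2\gamma^{q-2}$.
   Context: Norms w.r.t. $\mu^n$; $\log$ natural. $T_\rho f(x)=\mathbb{E}_y f(y)$ where $y$ keeps each $x_i$ independently with probability $\rho$ and otherwise resamples it from $\mu$. For $i\in[n]$, $E_i$ averages over coordinate $i$ according to $\mu$, $L_i=I-E_i$, $L_S=\prod_{i\in S}L_i$, $D_{S,x}f=(L_Sf)_{S\to x}$ with $h_{S\to x}(y)=h(x,y)$. $f$ is $(r,\gamma)$-$L_2$-global if $\|D_{S,x}f\|_2\le r^{|S|}\gamma$ for all $S\subseteq[n]$ and $x\in\Omega^S$. *)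

theory Defs
  imports "HOL-Analysis.Analysis"
begin

text \<open>The finite probability space (Omega, mu): Omega is a finite type 'a, mu a weight function.
Points of Omega^I are extensional functions in PiE I (\<lambda>_. UNIV); Omega^n uses I = {..<n}.\<close>

definition fin_prob :: "('a::finite \<Rightarrow> real) \<Rightarrow> bool" where
  "fin_prob \<mu> \<longleftrightarrow> (\<forall>a. 0 \<le> \<mu> a) \<and> (\<Sum>a\<in>UNIV. \<mu> a) = 1"

definition expect_on :: "('a::finite \<Rightarrow> real) \<Rightarrow> nat set \<Rightarrow> ((nat \<Rightarrow> 'a) \<Rightarrow> real) \<Rightarrow> real" where
  "expect_on \<mu> I g = (\<Sum>y\<in>PiE I (\<lambda>_. UNIV). (\<Prod>i\<in>I. \<mu> (y i)) * g y)"

definition normq_pow :: "('a::finite \<Rightarrow> real) \<Rightarrow> nat \<Rightarrow> real \<Rightarrow> ((nat \<Rightarrow> 'a) \<Rightarrow> real) \<Rightarrow> real" where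
  "normq_pow \<mu> n q f = expect_on \<mu> {..<n} (\<lambda>x. \<bar>f x\<bar> powr q)"

definition norm2_on :: "('a::finite \<Rightarrow> real) \<Rightarrow> nat set \<Rightarrow> ((nat \<Rightarrow> 'a) \<Rightarrow> real) \<Rightarrow> real" where
  "norm2_on \<mu> I g = sqrt (expect_on \<mu> I (\<lambda>y. (g y)\<^sup>2))"

text \<open>Noise operator: y keeps x_i with probability rho, otherwise resamples from mu.\<close>
definition T_op :: "('a::finite \<Rightarrow> real) \<Rightarrow> nat \<Rightarrow> real \<Rightarrow> ((nat \<Rightarrow> 'a) \<Rightarrow> real) \<Rightarrow> (nat \<Rightarrow> 'a) \<Rightarrow> real" where
  "T_op \<mu> n \<rho> f x = (\<Sum>y\<in>PiE {..<n} (\<lambda>_. UNIV).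
      (\<Prod>i<n. \<rho> * (if y i = x i then 1 else 0) + (1 - \<rho>) * \<mu> (y i)) * f y)"

definition E_op :: "('a::finite \<Rightarrow> real) \<Rightarrow> nat \<Rightarrow> ((nat \<Rightarrow> 'a) \<Rightarrow> real) \<Rightarrow> (nat \<Rightarrow> 'a) \<Rightarrow> real" where
  "E_op \<mu> i f x = (\<Sum>a\<in>UNIV. \<mu> a * f (x(i := a)))"

definition L_op :: "('a::finite \<Rightarrow> real) \<Rightarrow> nat \<Rightarrow> ((nat \<Rightarrow> 'a) \<Rightarrow> real) \<Rightarrow> (nat \<Rightarrow> 'a) \<Rightarrow> real" where
  "L_op \<mu> i f x = f x - E_op \<mu> i f x"

definition LS_op :: "('a::finite \<Rightarrow> real) \<Rightarrow> nat set \<Rightarrow> ((nat \<Rightarrow> 'a) \<Rightarrow> real) \<Rightarrow> (nat \<Rightarrow> 'a) \<Rightarrow> real" where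
  "LS_op \<mu> S f = foldr (L_op \<mu>) (sorted_list_of_set S) f"

definition D_op :: "('a::finite \<Rightarrow> real) \<Rightarrow> nat set \<Rightarrow> (nat \<Rightarrow> 'a) \<Rightarrow> ((nat \<Rightarrow> 'a) \<Rightarrow> real) \<Rightarrow> (nat \<Rightarrow> 'a) \<Rightarrow> real" where
  "D_op \<mu> S x f y = LS_op \<mu> S f (\<lambda>i. if i \<in> S then x i else y i)"

definition L2_global :: "('a::finite \<Rightarrow> real) \<Rightarrow> nat \<Rightarrow> real \<Rightarrow> real \<Rightarrow> ((nat \<Rightarrow> 'a) \<Rightarrow> real) \<Rightarrow> bool" where
  "L2_global \<mu> n r \<gamma> f \<longleftrightarrow>
     (\<forall>S \<subseteq> {..<n}. \<forall>x\<in>PiE S (\<lambda>_. UNIV).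
        norm2_on \<mu> ({..<n} - S) (D_op \<mu> S x f) \<le> r ^ card S * \<gamma>)"

end

theory Submission
  imports Defs "HOL-Analysis.Analysis"
begin


definition mrg :: "nat set \<Rightarrow> (nat \<Rightarrow> 'a) \<Rightarrow> (nat \<Rightarrow> 'a) \<Rightarrow> nat \<Rightarrow> 'a" where
  "mrg J x y = (\<lambda>j. if j \<in> J then y j else x j)"

definition KJ :: "('a::finite \<Rightarrow> 'a \<Rightarrow> real) \<Rightarrow> nat set \<Rightarrow> ((nat \<Rightarrow> 'a) \<Rightarrow> real) \<Rightarrow> (nat \<Rightarrow> 'a) \<Rightarrow> real" where
  "KJ k J g x = (\<Sum>y\<in>PiE J (\<lambda>_. UNIV). (\<Prod>i\<in>J. k (x i) (y i)) * g (mrg J x y))"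

definition K1 :: "('a::finite \<Rightarrow> 'a \<Rightarrow> real) \<Rightarrow> nat \<Rightarrow> ((nat \<Rightarrow> 'a) \<Rightarrow> real) \<Rightarrow> (nat \<Rightarrow> 'a) \<Rightarrow> real" where
  "K1 k i g x = (\<Sum>a\<in>UNIV. k (x i) a * g (x(i := a)))"

lemma KJ_empty[simp]: "KJ k {} g x = g x"
  by (simp add: KJ_def mrg_def)

lemma KJ_insert:
  assumes "finite J" "i \<notin> J"
  shows "KJ k (insert i J) g x = K1 k i (KJ k J g) x"
proof -
  have mrg_eq: "mrg (insert i J) x (h(i:=a)) = mrg J (x(i:=a)) h" for h a
    using assms(2) by (auto simp: mrg_def fun_eq_iff)
  have pr: "(\<Prod>j\<in>insert i J. k (x j) ((h(i:=a)) j)) = k (x i) a * (\<Prod>j\<in>J. k (x j) (h j))" for h a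
  proof -
    have "(\<Prod>j\<in>J. k (x j) ((h(i:=a)) j)) = (\<Prod>j\<in>J. k (x j) (h j))"
      using assms(2) by (intro prod.cong) auto
    then show ?thesis using assms by (simp add: prod.insert)
  qed
  have "KJ k (insert i J) g x = (\<Sum>(a,h)\<in>UNIV \<times> PiE J (\<lambda>_. UNIV).
        (\<Prod>j\<in>insert i J. k (x j) ((h(i:=a)) j)) * g (mrg (insert i J) x (h(i:=a))))"
    unfolding KJ_def PiE_insert_eq
    by (subst sum.reindex) (use inj_combinator[OF assms(2)] in \<open>auto simp: case_prod_beta\<close>)
  also have "\<dots> = (\<Sum>a\<in>UNIV. \<Sum>h\<in>PiE J (\<lambda>_. UNIV). k (x i) a * ((\<Prod>j\<in>J. k (x j) (h j)) * g (mrg J (x(i:=a)) h)))"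
    unfolding pr mrg_eq by (subst sum.cartesian_product[symmetric]) (simp only: case_prod_conv mult.assoc)
  also have "\<dots> = K1 k i (KJ k J g) x"
    unfolding K1_def KJ_def
  proof (intro sum.cong refl)
    fix a
    have "(\<Prod>j\<in>J. k ((x(i:=a)) j) (h j)) = (\<Prod>j\<in>J. k (x j) (h j))" for h
      using assms(2) by (intro prod.cong) auto
    then show "(\<Sum>h\<in>PiE J (\<lambda>_. UNIV). k (x i) a * ((\<Prod>j\<in>J. k (x j) (h j)) * g (mrg J (x(i:=a)) h)))
      = k (x i) a * (\<Sum>y\<in>PiE J (\<lambda>_. UNIV). (\<Prod>j\<in>J. k ((x(i:=a)) j) (y j)) * g (mrg J (x(i:=a)) y))"
      by (simp add: sum_distrib_left)
  qed
  finally show ?thesis .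
qed


definition indep :: "nat \<Rightarrow> ((nat \<Rightarrow> 'a) \<Rightarrow> real) \<Rightarrow> bool" where
  "indep i f \<longleftrightarrow> (\<forall>x a. f (x(i := a)) = f x)"

definition kE :: "('a::finite \<Rightarrow> real) \<Rightarrow> 'a \<Rightarrow> 'a \<Rightarrow> real" where
  "kE \<mu> u a = \<mu> a"

definition kT :: "('a::finite \<Rightarrow> real) \<Rightarrow> real \<Rightarrow> 'a \<Rightarrow> 'a \<Rightarrow> real" where
  "kT \<mu> \<rho> u a = \<rho> * (if a = u then 1 else 0) + (1 - \<rho>) * \<mu> a"

lemma K1_commute:
  assumes "i \<noteq> j"
  shows "K1 k i (K1 k' j g) x = K1 k' j (K1 k i g) x"
proof -
  have "K1 k i (K1 k' j g) x = (\<Sum>a\<in>UNIV. \<Sum>b\<in>UNIV. k (x i) a * (k' (x j) b * g (x(j := b, i := a))))"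
    unfolding K1_def using assms by (simp add: sum_distrib_left fun_upd_twist)
  also have "\<dots> = (\<Sum>b\<in>UNIV. \<Sum>a\<in>UNIV. k' (x j) b * (k (x i) a * g (x(j := b, i := a))))"
    by (subst sum.swap) (simp add: ac_simps)
  also have "\<dots> = K1 k' j (K1 k i g) x"
    unfolding K1_def using assms by (simp add: sum_distrib_left)
  finally show ?thesis .
qed

lemma K1_add: "K1 k i (\<lambda>x. f x + g x) x = K1 k i f x + K1 k i g x"
  by (simp add: K1_def distrib_left sum.distrib)
lemma K1_diff: "K1 k i (\<lambda>x. f x - g x) x = K1 k i f x - K1 k i g x"
  by (simp add: K1_def right_diff_distrib sum_subtractf)
lemma K1_cmult: "K1 k i (\<lambda>x. c * f x) x = c * K1 k i f x"
  by (simp add: K1_def sum_distrib_left ac_simps)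
lemma K1_zero: "K1 k i (\<lambda>x. 0) x = 0"
  by (simp add: K1_def)
lemma K1_sum: "K1 k i (\<lambda>x. \<Sum>s\<in>A. f s x) x = (\<Sum>s\<in>A. K1 k i (f s) x)"
  by (simp add: K1_def sum_distrib_left sum.swap[of _ A])
lemma K1_mono:
  assumes "\<And>u a. k u a \<ge> 0" "\<And>x. f x \<le> g x"
  shows "K1 k i f x \<le> K1 k i g x"
  unfolding K1_def by (rule sum_mono, rule mult_left_mono) (use assms in auto)

lemma KJ_add: "KJ k J (\<lambda>x. f x + g x) x = KJ k J f x + KJ k J g x"
  by (simp add: KJ_def distrib_left sum.distrib)
lemma KJ_diff: "KJ k J (\<lambda>x. f x - g x) x = KJ k J f x - KJ k J g x"
  by (simp add: KJ_def right_diff_distrib sum_subtractf)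
lemma KJ_cmult: "KJ k J (\<lambda>x. c * f x) x = c * KJ k J f x"
  by (simp add: KJ_def sum_distrib_left ac_simps)
lemma KJ_zero: "KJ k J (\<lambda>x. 0) x = 0"
  by (simp add: KJ_def)
lemma KJ_sum: "KJ k J (\<lambda>x. \<Sum>s\<in>A. f s x) x = (\<Sum>s\<in>A. KJ k J (f s) x)"
  by (simp add: KJ_def sum_distrib_left sum.swap[of _ A])
lemma KJ_mono:
  assumes "\<And>u a. k u a \<ge> 0" "\<And>x. f x \<le> g x"
  shows "KJ k J f x \<le> KJ k J g x"
  unfolding KJ_def by (rule sum_mono, rule mult_left_mono) (use assms in \<open>auto intro: prod_nonneg\<close>)
lemma KJ_cong:
  assumes "\<And>x. f x = g x"
  shows "KJ k J f x = KJ k J g x"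
  using assms by (simp add: KJ_def)

lemma indep_K1:
  assumes "indep j f" "i \<noteq> j"
  shows "indep j (K1 k i f)"
  using assms unfolding indep_def K1_def by (auto simp: fun_upd_twist)

lemma indep_K1_kE: "indep i (K1 (kE \<mu>) i f)"
  unfolding indep_def K1_def kE_def by auto

lemma indep_KJ:
  assumes "indep i f" "i \<notin> J"
  shows "indep i (KJ k J f)"
proof -
  have "mrg J (x(i:=a)) y = (mrg J x y)(i := a)" for x a y
    using assms(2) by (auto simp: mrg_def fun_eq_iff)
  moreover have "(\<Prod>ia\<in>J. k ((x(i:=a)) ia) (y ia)) = (\<Prod>ia\<in>J. k (x ia) (y ia))" for x a y
    using assms(2) by (intro prod.cong) auto
  ultimately show ?thesis using assms unfolding indep_def KJ_def by (metis (no_types, lifting) sum.cong)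
qed

lemma K1_indep_mult:
  assumes "indep i f"
  shows "K1 k i (\<lambda>x. f x * g x) x = f x * K1 k i g x"
  using assms unfolding indep_def K1_def by (simp add: sum_distrib_left ac_simps)

lemma K1_kE_indep:
  assumes "fin_prob \<mu>" "indep i f"
  shows "K1 (kE \<mu>) i f x = f x"
  using assms unfolding indep_def K1_def kE_def fin_prob_def by (simp flip: sum_distrib_right)

lemma KJ_K1_commute:
  assumes "finite J" "i \<notin> J"
  shows "KJ k J (K1 k' i g) x = K1 k' i (KJ k J g) x"
  using assms
proof (induction J arbitrary: x rule: finite_induct)
  case empty
  then show ?case by simp
next
  case (insert j J)
  have "KJ k (insert j J) (K1 k' i g) x = K1 k j (KJ k J (K1 k' i g)) x"
    using insert by (simp add: KJ_insert)
  also have "\<dots> = K1 k j (K1 k' i (KJ k J g)) x"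
  proof -
    have "KJ k J (K1 k' i g) = K1 k' i (KJ k J g)" using insert by (intro ext) simp
    then show ?thesis by simp
  qed
  also have "\<dots> = K1 k' i (K1 k j (KJ k J g)) x"
    using insert by (simp add: K1_commute)
  also have "\<dots> = K1 k' i (KJ k (insert j J) g) x"
  proof -
    have "KJ k (insert j J) g = K1 k j (KJ k J g)" using insert by (intro ext) (simp add: KJ_insert)
    then show ?thesis by simp
  qed
  finally show ?case .
qed

lemma KJ_insert':
  assumes "finite J" "i \<notin> J"
  shows "KJ k (insert i J) g x = KJ k J (K1 k i g) x"
  using assms by (simp add: KJ_insert KJ_K1_commute)

lemma KJ_union:
  assumes "finite A" "finite B" "A \<inter> B = {}"
  shows "KJ k (A \<union> B) g x = KJ k A (KJ k B g) x"
  using assms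
proof (induction A arbitrary: x rule: finite_induct)
  case empty
  then show ?case by simp
next
  case (insert i A)
  have "KJ k (insert i A \<union> B) g x = K1 k i (KJ k (A \<union> B) g) x"
    using insert by (simp add: KJ_insert)
  also have "\<dots> = K1 k i (KJ k A (KJ k B g)) x"
  proof -
    have "KJ k (A \<union> B) g = KJ k A (KJ k B g)" using insert by (intro ext) simp
    then show ?thesis by simp
  qed
  also have "\<dots> = KJ k (insert i A) (KJ k B g) x"
    using insert by (simp add: KJ_insert)
  finally show ?case .
qed


definition kD :: "('a::finite \<Rightarrow> real) \<Rightarrow> 'a \<Rightarrow> 'a \<Rightarrow> real" where
  "kD \<mu> u a = (if a = u then 1 else 0) - \<mu> a"

lemma K1_delta: "(\<Sum>a\<in>UNIV. (if a = x i then 1 else 0) * f (x(i := a))) = (f (x::nat\<Rightarrow>'a::finite) :: real)"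
proof -
  have "(\<Sum>a\<in>UNIV. (if a = x i then 1 else 0) * f (x(i := a))) = (\<Sum>a\<in>UNIV. if a = x i then f (x(i := a)) else 0)"
    by (intro sum.cong) auto
  also have "\<dots> = f (x(i := x i))" by (subst sum.delta) simp_all
  also have "\<dots> = f x" by simp
  finally show ?thesis .
qed

lemma E_op_K1: "E_op \<mu> i f x = K1 (kE \<mu>) i f x"
  by (simp add: E_op_def K1_def kE_def)
lemma E_op_K1': "E_op \<mu> i f = K1 (kE \<mu>) i f"
  by (simp add: E_op_K1 fun_eq_iff)

lemma L_op_K1: "L_op \<mu> i f x = K1 (kD \<mu>) i f x"
proof -
  have "K1 (kD \<mu>) i f x = (\<Sum>a\<in>UNIV. (if a = x i then 1 else 0) * f (x(i := a))) - E_op \<mu> i f x"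
    by (simp add: K1_def kD_def E_op_def left_diff_distrib sum_subtractf)
  then show ?thesis by (simp add: K1_delta L_op_def)
qed
lemma L_op_K1': "L_op \<mu> i f = K1 (kD \<mu>) i f"
  by (simp add: L_op_K1 fun_eq_iff)

lemma K1_kT: "K1 (kT \<mu> \<rho>) i f x = E_op \<mu> i f x + \<rho> * L_op \<mu> i f x"
proof -
  have "K1 (kT \<mu> \<rho>) i f x = (\<Sum>a\<in>UNIV. \<rho> * ((if a = x i then 1 else 0) * f (x(i := a))) + (1 - \<rho>) * (\<mu> a * f (x(i := a))))"
    unfolding K1_def kT_def by (intro sum.cong) (auto simp: algebra_simps)
  also have "\<dots> = \<rho> * (\<Sum>a\<in>UNIV. (if a = x i then 1 else 0) * f (x(i := a))) + (1 - \<rho>) * E_op \<mu> i f x"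
    by (simp add: sum.distrib sum_distrib_left E_op_def)
  finally have "K1 (kT \<mu> \<rho>) i f x = \<rho> * (\<Sum>a\<in>UNIV. (if a = x i then 1 else 0) * f (x(i := a))) + (1 - \<rho>) * E_op \<mu> i f x" .
  then show ?thesis by (simp only: K1_delta) (simp add: L_op_def algebra_simps)
qed

lemma kE_nonneg: "fin_prob \<mu> \<Longrightarrow> kE \<mu> u a \<ge> 0"
  by (simp add: fin_prob_def kE_def)

lemma indep_E: "indep i (E_op \<mu> i f)"
  by (simp add: E_op_K1' indep_K1_kE)

lemma E_E: "fin_prob \<mu> \<Longrightarrow> E_op \<mu> i (E_op \<mu> i f) x = E_op \<mu> i f x"
  by (metis E_op_K1 K1_kE_indep indep_E)

lemma E_L: "fin_prob \<mu> \<Longrightarrow> E_op \<mu> i (L_op \<mu> i f) x = 0"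
proof -
  assume a: "fin_prob \<mu>"
  have "E_op \<mu> i (L_op \<mu> i f) x = E_op \<mu> i f x - E_op \<mu> i (E_op \<mu> i f) x"
    unfolding L_op_def E_op_K1 by (rule K1_diff)
  then show ?thesis using E_E[OF a] by simp
qed

lemma LS_op_empty[simp]: "LS_op \<mu> {} f = f"
  by (simp add: LS_op_def)

lemma L_commute: "i \<noteq> j \<Longrightarrow> L_op \<mu> i (L_op \<mu> j f) = L_op \<mu> j (L_op \<mu> i f)"
  by (simp add: L_op_K1' K1_commute fun_eq_iff)

lemma foldr_insort_L:
  assumes "i \<notin> set xs"
  shows "foldr (L_op \<mu>) (insort i xs) f = L_op \<mu> i (foldr (L_op \<mu>) xs f)"
  using assms
proof (induction xs)
  case Nil
  then show ?case by simp
next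
  case (Cons a xs)
  then show ?case by (auto simp: L_commute)
qed

lemma LS_op_insert:
  assumes "finite S" "i \<notin> S"
  shows "LS_op \<mu> (insert i S) f = L_op \<mu> i (LS_op \<mu> S f)"
  using assms by (simp add: LS_op_def sorted_list_of_set_insert foldr_insort_L)

lemma LS_K1:
  assumes "finite S" "i \<notin> S"
  shows "LS_op \<mu> S (K1 k i g) = K1 k i (LS_op \<mu> S g)"
  using assms
proof (induction S rule: finite_induct)
  case empty
  then show ?case by simp
next
  case (insert j S)
  have "LS_op \<mu> (insert j S) (K1 k i g) = L_op \<mu> j (K1 k i (LS_op \<mu> S g))"
    using insert by (simp add: LS_op_insert)
  also have "\<dots> = K1 k i (L_op \<mu> j (LS_op \<mu> S g))"
    using insert by (simp add: L_op_K1' K1_commute fun_eq_iff)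
  also have "\<dots> = K1 k i (LS_op \<mu> (insert j S) g)"
    using insert by (simp add: LS_op_insert)
  finally show ?case .
qed

lemma LS_op_insert':
  assumes "finite S" "i \<notin> S"
  shows "LS_op \<mu> (insert i S) f = LS_op \<mu> S (L_op \<mu> i f)"
  using assms by (simp add: LS_op_insert L_op_K1' LS_K1)


lemma sum_Pow_insert:
  assumes "finite J" "i \<notin> J"
  shows "(\<Sum>S\<in>Pow (insert i J). F S) = (\<Sum>S\<in>Pow J. F S) + (\<Sum>S\<in>Pow J. F (insert i S))"
proof -
  have d: "Pow J \<inter> insert i ` Pow J = {}" using assms(2) by auto
  have inj: "inj_on (insert i) (Pow J)" using assms(2) unfolding inj_on_def by (metis PowD insert_ident subsetD)
  have "(\<Sum>S\<in>Pow (insert i J). F S) = (\<Sum>S\<in>Pow J \<union> insert i ` Pow J. F S)"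
    by (simp add: Pow_insert)
  also have "\<dots> = (\<Sum>S\<in>Pow J. F S) + (\<Sum>S\<in>insert i ` Pow J. F S)"
    using assms(1) d by (intro sum.union_disjoint) auto
  also have "(\<Sum>S\<in>insert i ` Pow J. F S) = (\<Sum>S\<in>Pow J. F (insert i S))"
    using inj by (simp add: sum.reindex)
  finally show ?thesis .
qed

lemma KJ_nonneg:
  assumes "\<And>u a. k u a \<ge> 0" "\<And>x. f x \<ge> 0"
  shows "KJ k J f x \<ge> 0"
  using KJ_mono[of k "\<lambda>_. 0" f J x] assms by (simp add: KJ_zero)

lemma KJ_CS:
  assumes "\<And>u a. k u a \<ge> 0"
  shows "(KJ k J (\<lambda>x. f x * g x) x)\<^sup>2 \<le> KJ k J (\<lambda>x. (f x)\<^sup>2) x * KJ k J (\<lambda>x. (g x)\<^sup>2) x"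
proof -
  define w where "w y = (\<Prod>i\<in>J. k (x i) (y i))" for y
  have w0: "w y \<ge> 0" for y unfolding w_def using assms by (intro prod_nonneg) auto
  have "KJ k J (\<lambda>x. f x * g x) x = (\<Sum>y\<in>PiE J (\<lambda>_. UNIV). (sqrt (w y) * f (mrg J x y)) * (sqrt (w y) * g (mrg J x y)))"
    unfolding KJ_def w_def[symmetric] using w0 by (intro sum.cong) (auto simp: ac_simps real_sqrt_mult[symmetric])
  moreover have "KJ k J (\<lambda>x. (f x)\<^sup>2) x = (\<Sum>y\<in>PiE J (\<lambda>_. UNIV). (sqrt (w y) * f (mrg J x y))\<^sup>2)"
    unfolding KJ_def w_def[symmetric] using w0 by (intro sum.cong) (auto simp: power_mult_distrib)
  moreover have "KJ k J (\<lambda>x. (g x)\<^sup>2) x = (\<Sum>y\<in>PiE J (\<lambda>_. UNIV). (sqrt (w y) * g (mrg J x y))\<^sup>2)"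
    unfolding KJ_def w_def[symmetric] using w0 by (intro sum.cong) (auto simp: power_mult_distrib)
  ultimately show ?thesis by (simp only: Cauchy_Schwarz_ineq_sum)
qed

lemma indep_comp: "indep i f \<Longrightarrow> indep i (\<lambda>x. h (f x))"
  by (simp add: indep_def)


lemma claimQ:
  assumes mu: "fin_prob \<mu>" and c0: "c \<ge> 0" and sc: "\<sigma>\<^sup>2 + c \<le> 1" and fin: "finite J"
  shows "(\<Sum>S\<in>Pow J. c ^ card S * KJ (kE \<mu>) J (\<lambda>w. (KJ (kT \<mu> \<sigma>) (J - S) (LS_op \<mu> S g) w)\<^sup>2) x)
         \<le> KJ (kE \<mu>) J (\<lambda>w. (g w)\<^sup>2) x"
  using fin
proof (induction J arbitrary: g x rule: finite_induct)
  case empty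
  then show ?case by simp
next
  case (insert i J0)
  note kpos = kE_nonneg[OF mu]
  define G where "G = K1 (kT \<mu> \<sigma>) i g"
  define Lg where "Lg = L_op \<mu> i g"
  define Eg where "Eg = E_op \<mu> i g"
  let ?F = "\<lambda>S. c ^ card S * KJ (kE \<mu>) (insert i J0) (\<lambda>w. (KJ (kT \<mu> \<sigma>) (insert i J0 - S) (LS_op \<mu> S g) w)\<^sup>2) x"
  have t1: "?F S = c ^ card S * K1 (kE \<mu>) i (KJ (kE \<mu>) J0 (\<lambda>w. (KJ (kT \<mu> \<sigma>) (J0 - S) (LS_op \<mu> S G) w)\<^sup>2)) x"
    if "S \<in> Pow J0" for S
  proof -
    have fS: "finite S" using that insert(1) finite_subset by auto
    have iS: "i \<notin> S" using that insert(2) by auto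
    have eq: "insert i J0 - S = insert i (J0 - S)" using iS by auto
    have "KJ (kT \<mu> \<sigma>) (insert i J0 - S) (LS_op \<mu> S g) w = KJ (kT \<mu> \<sigma>) (J0 - S) (LS_op \<mu> S G) w" for w
      unfolding eq G_def using insert(1,2) fS iS by (simp add: KJ_insert' LS_K1)
    then show ?thesis using insert(1,2) by (simp add: KJ_insert)
  qed
  have t2: "?F (insert i S) = c * (c ^ card S * K1 (kE \<mu>) i (KJ (kE \<mu>) J0 (\<lambda>w. (KJ (kT \<mu> \<sigma>) (J0 - S) (LS_op \<mu> S Lg) w)\<^sup>2)) x)"
    if "S \<in> Pow J0" for S
  proof -
    have fS: "finite S" using that insert(1) finite_subset by auto
    have iS: "i \<notin> S" using that insert(2) by auto
    have eq: "insert i J0 - insert i S = J0 - S" using insert(2) by auto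
    show ?thesis unfolding eq Lg_def using insert(1,2) fS iS
      by (simp add: KJ_insert LS_op_insert' card_insert_if)
  qed
  have split: "(\<Sum>S\<in>Pow (insert i J0). ?F S) = (\<Sum>S\<in>Pow J0. ?F S) + (\<Sum>S\<in>Pow J0. ?F (insert i S))"
    using insert(1,2) by (rule sum_Pow_insert)
  have "(\<Sum>S\<in>Pow J0. ?F S) = (\<Sum>S\<in>Pow J0. c ^ card S * K1 (kE \<mu>) i (KJ (kE \<mu>) J0 (\<lambda>w. (KJ (kT \<mu> \<sigma>) (J0 - S) (LS_op \<mu> S G) w)\<^sup>2)) x)"
    by (rule sum.cong[OF refl]) (rule t1)
  also have "\<dots> = K1 (kE \<mu>) i (\<lambda>v. \<Sum>S\<in>Pow J0. c ^ card S * KJ (kE \<mu>) J0 (\<lambda>w. (KJ (kT \<mu> \<sigma>) (J0 - S) (LS_op \<mu> S G) w)\<^sup>2) v) x"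
    by (simp only: K1_sum K1_cmult)
  also have "\<dots> \<le> K1 (kE \<mu>) i (\<lambda>v. KJ (kE \<mu>) J0 (\<lambda>w. (G w)\<^sup>2) v) x"
    by (rule K1_mono[OF kpos insert(3)])
  finally have B1: "(\<Sum>S\<in>Pow J0. ?F S) \<le> K1 (kE \<mu>) i (\<lambda>v. KJ (kE \<mu>) J0 (\<lambda>w. (G w)\<^sup>2) v) x" .
  have "(\<Sum>S\<in>Pow J0. ?F (insert i S)) = (\<Sum>S\<in>Pow J0. c * (c ^ card S * K1 (kE \<mu>) i (KJ (kE \<mu>) J0 (\<lambda>w. (KJ (kT \<mu> \<sigma>) (J0 - S) (LS_op \<mu> S Lg) w)\<^sup>2)) x))"
    by (rule sum.cong[OF refl]) (rule t2)
  also have "\<dots> = c * K1 (kE \<mu>) i (\<lambda>v. \<Sum>S\<in>Pow J0. c ^ card S * KJ (kE \<mu>) J0 (\<lambda>w. (KJ (kT \<mu> \<sigma>) (J0 - S) (LS_op \<mu> S Lg) w)\<^sup>2) v) x"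
    by (simp only: K1_sum K1_cmult sum_distrib_left)
  also have "\<dots> \<le> c * K1 (kE \<mu>) i (\<lambda>v. KJ (kE \<mu>) J0 (\<lambda>w. (Lg w)\<^sup>2) v) x"
    by (rule mult_left_mono[OF K1_mono[OF kpos insert(3)] c0])
  finally have B2: "(\<Sum>S\<in>Pow J0. ?F (insert i S)) \<le> c * K1 (kE \<mu>) i (\<lambda>v. KJ (kE \<mu>) J0 (\<lambda>w. (Lg w)\<^sup>2) v) x" .
  have B3: "K1 (kE \<mu>) i (\<lambda>v. KJ (kE \<mu>) J0 (\<lambda>w. (G w)\<^sup>2) v) x + c * K1 (kE \<mu>) i (\<lambda>v. KJ (kE \<mu>) J0 (\<lambda>w. (Lg w)\<^sup>2) v) x
     = KJ (kE \<mu>) (insert i J0) (\<lambda>w. (G w)\<^sup>2 + c * (Lg w)\<^sup>2) x"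
    using insert(1,2) by (simp only: KJ_add KJ_cmult) (simp add: KJ_insert)
  have A: "(\<Sum>S\<in>Pow (insert i J0). ?F S) \<le> KJ (kE \<mu>) (insert i J0) (\<lambda>w. (G w)\<^sup>2 + c * (Lg w)\<^sup>2) x"
    using split B1 B2 B3 by linarith
  have ge: "G w = Eg w + \<sigma> * Lg w" for w unfolding G_def Eg_def Lg_def by (rule K1_kT)
  have gg: "g w = Eg w + Lg w" for w unfolding Eg_def Lg_def L_op_def by simp
  have cross: "KJ (kE \<mu>) (insert i J0) (\<lambda>w. Eg w * Lg w) x = 0"
  proof -
    have "K1 (kE \<mu>) i (\<lambda>w. Eg w * Lg w) v = 0" for v
      using K1_indep_mult[of i Eg "kE \<mu>" Lg v] E_L[OF mu, of i g v]
      unfolding Eg_def Lg_def by (simp add: indep_E E_op_K1)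
    then have "K1 (kE \<mu>) i (\<lambda>w. Eg w * Lg w) = (\<lambda>_. 0)" by (intro ext)
    then show ?thesis using insert(1,2) by (simp add: KJ_insert' KJ_zero)
  qed
  have "KJ (kE \<mu>) (insert i J0) (\<lambda>w. (g w)\<^sup>2) x - KJ (kE \<mu>) (insert i J0) (\<lambda>w. (G w)\<^sup>2 + c * (Lg w)\<^sup>2) x
      = KJ (kE \<mu>) (insert i J0) (\<lambda>w. (1 - \<sigma>\<^sup>2 - c) * (Lg w)\<^sup>2 + (2 * (1 - \<sigma>)) * (Eg w * Lg w)) x"
    unfolding KJ_diff[symmetric] by (intro KJ_cong) (simp add: ge gg power2_eq_square algebra_simps)
  also have "\<dots> = (1 - \<sigma>\<^sup>2 - c) * KJ (kE \<mu>) (insert i J0) (\<lambda>w. (Lg w)\<^sup>2) x"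
    by (simp add: KJ_add KJ_cmult cross)
  also have "\<dots> \<ge> 0" using sc by (intro mult_nonneg_nonneg KJ_nonneg kpos) auto
  finally show ?case using A by linarith
qed


definition Nq :: "('a::finite \<Rightarrow> real) \<Rightarrow> real \<Rightarrow> nat set \<Rightarrow> nat set \<Rightarrow> ((nat \<Rightarrow> 'a) \<Rightarrow> real) \<Rightarrow> (nat \<Rightarrow> 'a) \<Rightarrow> real" where
  "Nq \<mu> \<sigma> J S g x = KJ (kE \<mu>) (J - S) (\<lambda>w. (KJ (kT \<mu> \<sigma>) (J - S) (LS_op \<mu> S g) w)\<^sup>2) x"

definition Hscal :: "('a::finite \<Rightarrow> real) \<Rightarrow> real \<Rightarrow> real \<Rightarrow> real \<Rightarrow> real \<Rightarrow> bool" where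
 "Hscal \<mu> p \<rho> \<sigma> \<beta> \<longleftrightarrow> (\<forall>s t cc. s \<ge> 0 \<longrightarrow> (\<forall>z. t z \<ge> 0) \<longrightarrow> (\<Sum>z\<in>UNIV. \<mu> z * cc z) = 0 \<longrightarrow> (\<forall>z. (cc z)\<^sup>2 \<le> s * t z) \<longrightarrow>
   (\<Sum>z\<in>UNIV. \<mu> z * (s + 2*\<rho>*cc z + \<rho>\<^sup>2 * t z) powr p) \<le> (s + \<sigma>\<^sup>2 * (\<Sum>z\<in>UNIV. \<mu> z * t z)) powr p + \<beta> * (\<Sum>z\<in>UNIV. \<mu> z * (t z powr p)))"

lemma KT_K1kT: "KJ k R (K1 (kT \<mu> \<rho>) i u) x = KJ k R (E_op \<mu> i u) x + \<rho> * KJ k R (L_op \<mu> i u) x"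
proof -
  have "K1 (kT \<mu> \<rho>) i u = (\<lambda>x. E_op \<mu> i u x + \<rho> * L_op \<mu> i u x)" by (intro ext) (rule K1_kT)
  then show ?thesis by (simp add: KJ_add KJ_cmult)
qed

lemma KJ_sq_expand: "KJ k R (\<lambda>x. (P x + a * Q x)\<^sup>2) v = KJ k R (\<lambda>x. (P x)\<^sup>2) v + 2 * a * KJ k R (\<lambda>x. P x * Q x) v + a\<^sup>2 * KJ k R (\<lambda>x. (Q x)\<^sup>2) v"
proof -
  have "KJ k R (\<lambda>x. (P x + a * Q x)\<^sup>2) v = KJ k R (\<lambda>x. (P x)\<^sup>2 + ((2 * a) * (P x * Q x) + a\<^sup>2 * (Q x)\<^sup>2)) v"
    by (intro KJ_cong) (simp add: power2_eq_square algebra_simps)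
  then show ?thesis by (simp add: KJ_add KJ_cmult)
qed

lemma stepC:
  assumes mu: "fin_prob \<mu>" and H: "Hscal \<mu> p \<rho> \<sigma> \<beta>" and fin: "finite J0" and iJ: "i \<notin> J0" and SJ: "S \<subseteq> J0"
  shows "K1 (kE \<mu>) i (\<lambda>v. Nq \<mu> \<sigma> J0 S (K1 (kT \<mu> \<rho>) i g) v powr p) w
     \<le> Nq \<mu> \<sigma> (insert i J0) S g w powr p + \<beta> * K1 (kE \<mu>) i (\<lambda>v. Nq \<mu> \<sigma> (insert i J0) (insert i S) g v powr p) w"
proof -
  note kpos = kE_nonneg[OF mu]
  have fS: "finite S" using SJ fin finite_subset by auto
  have iS: "i \<notin> S" using SJ iJ by auto
  define R where "R = J0 - S"
  have fR: "finite R" and iR: "i \<notin> R" using fin iJ by (auto simp: R_def)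
  define u where "u = LS_op \<mu> S g"
  define P where "P = KJ (kT \<mu> \<sigma>) R (E_op \<mu> i u)"
  define Q where "Q = KJ (kT \<mu> \<sigma>) R (L_op \<mu> i u)"
  define s where "s = KJ (kE \<mu>) R (\<lambda>x. (P x)\<^sup>2)"
  define c where "c = KJ (kE \<mu>) R (\<lambda>x. P x * Q x)"
  define t where "t = KJ (kE \<mu>) R (\<lambda>x. (Q x)\<^sup>2)"
  have indP: "indep i P" unfolding P_def using iR by (intro indep_KJ indep_E)
  have inds: "indep i s" unfolding s_def using iR by (intro indep_KJ indep_comp[OF indP])
  have s0: "s v \<ge> 0" for v unfolding s_def by (intro KJ_nonneg kpos) auto
  have t0: "t v \<ge> 0" for v unfolding t_def by (intro KJ_nonneg kpos) auto
  have CS: "(c v)\<^sup>2 \<le> s v * t v" for v unfolding c_def s_def t_def by (rule KJ_CS[OF kpos])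
  have EQ: "K1 (kE \<mu>) i Q x = 0" for x
  proof -
    have "K1 (kE \<mu>) i Q x = KJ (kT \<mu> \<sigma>) R (K1 (kE \<mu>) i (L_op \<mu> i u)) x"
      unfolding Q_def using fR iR by (simp add: KJ_K1_commute)
    also have "K1 (kE \<mu>) i (L_op \<mu> i u) = (\<lambda>_. 0)"
      using E_L[OF mu] by (simp add: E_op_K1' fun_eq_iff)
    finally show ?thesis by (simp add: KJ_zero)
  qed
  have Ec: "K1 (kE \<mu>) i c w = 0"
  proof -
    have "K1 (kE \<mu>) i c w = KJ (kE \<mu>) R (K1 (kE \<mu>) i (\<lambda>x. P x * Q x)) w"
      unfolding c_def using fR iR by (simp add: KJ_K1_commute)
    also have "K1 (kE \<mu>) i (\<lambda>x. P x * Q x) = (\<lambda>_. 0)"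
      by (intro ext) (simp add: K1_indep_mult[OF indP] EQ)
    finally show ?thesis by (simp add: KJ_zero)
  qed
  have N1: "Nq \<mu> \<sigma> J0 S (K1 (kT \<mu> \<rho>) i g) v = s v + 2 * \<rho> * c v + \<rho>\<^sup>2 * t v" for v
  proof -
    have "LS_op \<mu> S (K1 (kT \<mu> \<rho>) i g) = K1 (kT \<mu> \<rho>) i u" unfolding u_def using fS iS by (rule LS_K1)
    then have "Nq \<mu> \<sigma> J0 S (K1 (kT \<mu> \<rho>) i g) v = KJ (kE \<mu>) R (\<lambda>x. (P x + \<rho> * Q x)\<^sup>2) v"
      unfolding Nq_def R_def[symmetric] P_def Q_def by (simp add: KT_K1kT)
    then show ?thesis unfolding s_def c_def t_def by (simp add: KJ_sq_expand)
  qed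
  have N3: "Nq \<mu> \<sigma> (insert i J0) (insert i S) g v = t v" for v
  proof -
    have e: "insert i J0 - insert i S = R" using iJ by (auto simp: R_def)
    have "LS_op \<mu> (insert i S) g = L_op \<mu> i u" unfolding u_def using fS iS by (rule LS_op_insert)
    then show ?thesis unfolding Nq_def e t_def Q_def by simp
  qed
  have N2: "Nq \<mu> \<sigma> (insert i J0) S g w = s w + \<sigma>\<^sup>2 * (\<Sum>z\<in>UNIV. \<mu> z * t (w(i := z)))"
  proof -
    have e: "insert i J0 - S = insert i R" using iS by (auto simp: R_def)
    have "KJ (kT \<mu> \<sigma>) (insert i R) u x = P x + \<sigma> * Q x" for x
      unfolding P_def Q_def using fR iR by (simp add: KJ_insert' KT_K1kT)
    then have "Nq \<mu> \<sigma> (insert i J0) S g w = K1 (kE \<mu>) i (KJ (kE \<mu>) R (\<lambda>x. (P x + \<sigma> * Q x)\<^sup>2)) w"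
      unfolding Nq_def e u_def[symmetric] using fR iR by (simp add: KJ_insert)
    also have "KJ (kE \<mu>) R (\<lambda>x. (P x + \<sigma> * Q x)\<^sup>2) = (\<lambda>v. s v + (2 * \<sigma>) * c v + \<sigma>\<^sup>2 * t v)"
      unfolding s_def c_def t_def by (intro ext) (simp add: KJ_sq_expand)
    also have "K1 (kE \<mu>) i (\<lambda>v. s v + (2 * \<sigma>) * c v + \<sigma>\<^sup>2 * t v) w = K1 (kE \<mu>) i s w + (2*\<sigma>) * K1 (kE \<mu>) i c w + \<sigma>\<^sup>2 * K1 (kE \<mu>) i t w"
      by (simp add: K1_add K1_cmult)
    also have "\<dots> = s w + \<sigma>\<^sup>2 * (\<Sum>z\<in>UNIV. \<mu> z * t (w(i := z)))"
      using K1_kE_indep[OF mu inds] Ec by (simp add: K1_def kE_def)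
    finally show ?thesis .
  qed
  have sz: "s (w(i := z)) = s w" for z using inds unfolding indep_def by simp
  have "K1 (kE \<mu>) i (\<lambda>v. Nq \<mu> \<sigma> J0 S (K1 (kT \<mu> \<rho>) i g) v powr p) w
      = (\<Sum>z\<in>UNIV. \<mu> z * (s w + 2 * \<rho> * c (w(i:=z)) + \<rho>\<^sup>2 * t (w(i:=z))) powr p)"
    by (simp add: K1_def kE_def N1 sz)
  also have "\<dots> \<le> (s w + \<sigma>\<^sup>2 * (\<Sum>z\<in>UNIV. \<mu> z * t (w(i:=z)))) powr p + \<beta> * (\<Sum>z\<in>UNIV. \<mu> z * (t (w(i:=z)) powr p))"
  proof -
    have "(\<Sum>z\<in>UNIV. \<mu> z * c (w(i:=z))) = 0" using Ec by (simp add: K1_def kE_def)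
    moreover have "(c (w(i:=z)))\<^sup>2 \<le> s w * t (w(i:=z))" for z using CS[of "w(i:=z)"] sz by simp
    ultimately show ?thesis
      using H[unfolded Hscal_def, rule_format, of "s w" "\<lambda>z. t (w(i:=z))" "\<lambda>z. c (w(i:=z))"] s0 t0
      by simp
  qed
  also have "\<dots> = Nq \<mu> \<sigma> (insert i J0) S g w powr p + \<beta> * K1 (kE \<mu>) i (\<lambda>v. Nq \<mu> \<sigma> (insert i J0) (insert i S) g v powr p) w"
    by (simp add: N2 N3 K1_def kE_def)
  finally show ?thesis .
qed


lemma claimC:
  assumes mu: "fin_prob \<mu>" and H: "Hscal \<mu> p \<rho> \<sigma> \<beta>" and b0: "\<beta> \<ge> 0" and fin: "finite J"
  shows "KJ (kE \<mu>) J (\<lambda>w. ((KJ (kT \<mu> \<rho>) J g w)\<^sup>2) powr p) x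
     \<le> (\<Sum>S\<in>Pow J. \<beta> ^ card S * KJ (kE \<mu>) S (\<lambda>w. Nq \<mu> \<sigma> J S g w powr p) x)"
  using fin
proof (induction J arbitrary: g x rule: finite_induct)
  case empty
  then show ?case by (simp add: Nq_def)
next
  case (insert i J0)
  note kpos = kE_nonneg[OF mu]
  define h where "h = K1 (kT \<mu> \<rho>) i g"
  define J where "J = insert i J0"
  have eT: "KJ (kT \<mu> \<rho>) J g w = KJ (kT \<mu> \<rho>) J0 h w" for w
    unfolding J_def h_def using insert(1,2) by (rule KJ_insert')
  have "KJ (kE \<mu>) J (\<lambda>w. ((KJ (kT \<mu> \<rho>) J g w)\<^sup>2) powr p) x
      = K1 (kE \<mu>) i (KJ (kE \<mu>) J0 (\<lambda>w. ((KJ (kT \<mu> \<rho>) J0 h w)\<^sup>2) powr p)) x"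
    unfolding eT unfolding J_def using insert(1,2) by (rule KJ_insert)
  also have "\<dots> \<le> K1 (kE \<mu>) i (\<lambda>v. \<Sum>S\<in>Pow J0. \<beta> ^ card S * KJ (kE \<mu>) S (\<lambda>w. Nq \<mu> \<sigma> J0 S h w powr p) v) x"
    by (rule K1_mono[OF kpos insert(3)])
  also have "\<dots> = (\<Sum>S\<in>Pow J0. \<beta> ^ card S * KJ (kE \<mu>) S (K1 (kE \<mu>) i (\<lambda>w. Nq \<mu> \<sigma> J0 S h w powr p)) x)"
  proof -
    have "K1 (kE \<mu>) i (KJ (kE \<mu>) S (\<lambda>w. Nq \<mu> \<sigma> J0 S h w powr p)) x = KJ (kE \<mu>) S (K1 (kE \<mu>) i (\<lambda>w. Nq \<mu> \<sigma> J0 S h w powr p)) x"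
      if "S \<in> Pow J0" for S
      using that insert(1,2) finite_subset by (intro KJ_K1_commute[symmetric]) auto
    then show ?thesis by (simp add: K1_sum K1_cmult)
  qed
  also have "\<dots> \<le> (\<Sum>S\<in>Pow J0. \<beta> ^ card S * KJ (kE \<mu>) S (\<lambda>w. Nq \<mu> \<sigma> J S g w powr p + \<beta> * K1 (kE \<mu>) i (\<lambda>v. Nq \<mu> \<sigma> J (insert i S) g v powr p) w) x)"
    unfolding J_def h_def
    by (intro sum_mono mult_left_mono KJ_mono kpos stepC[OF mu H insert(1,2)] zero_le_power b0) auto
  also have "\<dots> = (\<Sum>S\<in>Pow J0. \<beta> ^ card S * KJ (kE \<mu>) S (\<lambda>w. Nq \<mu> \<sigma> J S g w powr p) x)
     + (\<Sum>S\<in>Pow J0. \<beta> ^ card (insert i S) * KJ (kE \<mu>) (insert i S) (\<lambda>w. Nq \<mu> \<sigma> J (insert i S) g w powr p) x)"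
  proof -
    have "\<beta> ^ card S * KJ (kE \<mu>) S (\<lambda>w. Nq \<mu> \<sigma> J S g w powr p + \<beta> * K1 (kE \<mu>) i (\<lambda>v. Nq \<mu> \<sigma> J (insert i S) g v powr p) w) x
       = \<beta> ^ card S * KJ (kE \<mu>) S (\<lambda>w. Nq \<mu> \<sigma> J S g w powr p) x + \<beta> ^ card (insert i S) * KJ (kE \<mu>) (insert i S) (\<lambda>w. Nq \<mu> \<sigma> J (insert i S) g w powr p) x"
      if "S \<in> Pow J0" for S
    proof -
      have fS: "finite S" "i \<notin> S" using that insert(1,2) finite_subset by auto
      then show ?thesis by (simp add: KJ_add KJ_cmult KJ_insert' distrib_left)
    qed
    then show ?thesis by (simp add: sum.distrib)
  qed
  also have "\<dots> = (\<Sum>S\<in>Pow J. \<beta> ^ card S * KJ (kE \<mu>) S (\<lambda>w. Nq \<mu> \<sigma> J S g w powr p) x)"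
    unfolding J_def using insert(1,2) by (rule sum_Pow_insert[symmetric])
  finally show ?case unfolding J_def .
qed


lemma contraction:
  assumes mu: "fin_prob \<mu>" and s1: "\<sigma>\<^sup>2 \<le> 1" and fin: "finite R"
  shows "KJ (kE \<mu>) R (\<lambda>w. (KJ (kT \<mu> \<sigma>) R g w)\<^sup>2) x \<le> KJ (kE \<mu>) R (\<lambda>w. (g w)\<^sup>2) x"
proof -
  have "(\<Sum>S\<in>Pow R. 0 ^ card S * KJ (kE \<mu>) R (\<lambda>w. (KJ (kT \<mu> \<sigma>) (R - S) (LS_op \<mu> S g) w)\<^sup>2) x)
     = (\<Sum>S\<in>Pow R. if S = {} then KJ (kE \<mu>) R (\<lambda>w. (KJ (kT \<mu> \<sigma>) R g w)\<^sup>2) x else 0)"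
  proof (intro sum.cong refl)
    fix S assume "S \<in> Pow R"
    then have "finite S" using fin finite_subset by auto
    then show "0 ^ card S * KJ (kE \<mu>) R (\<lambda>w. (KJ (kT \<mu> \<sigma>) (R - S) (LS_op \<mu> S g) w)\<^sup>2) x
      = (if S = {} then KJ (kE \<mu>) R (\<lambda>w. (KJ (kT \<mu> \<sigma>) R g w)\<^sup>2) x else 0)"
      by (cases "S = {}") auto
  qed
  also have "\<dots> = KJ (kE \<mu>) R (\<lambda>w. (KJ (kT \<mu> \<sigma>) R g w)\<^sup>2) x"
    using fin by (subst sum.delta) auto
  finally show ?thesis using claimQ[OF mu _ _ fin, of 0 \<sigma> g x] s1 by simp
qed

lemma mrg_PiE: "y \<in> PiE I (\<lambda>_. UNIV) \<Longrightarrow> (\<forall>j. j \<notin> I \<longrightarrow> x j = undefined) \<Longrightarrow> mrg I x y = y"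
  by (auto simp: mrg_def fun_eq_iff PiE_def extensional_def)

lemma expect_on_KJ: "expect_on \<mu> I g = KJ (kE \<mu>) I g (\<lambda>_. undefined)"
  unfolding expect_on_def KJ_def kE_def by (intro sum.cong refl) (simp add: mrg_PiE)

lemma KJ_mono_b0:
  assumes "fin_prob \<mu>" "\<And>x. x \<in> PiE S (\<lambda>_. UNIV) \<Longrightarrow> F x \<le> G x"
  shows "KJ (kE \<mu>) S F (\<lambda>_. undefined) \<le> KJ (kE \<mu>) S G (\<lambda>_. undefined)"
  unfolding KJ_def
proof (rule sum_mono)
  fix y :: "nat \<Rightarrow> 'a" assume y: "y \<in> PiE S (\<lambda>_. UNIV)"
  have "F (mrg S (\<lambda>_. undefined) y) \<le> G (mrg S (\<lambda>_. undefined) y)"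
    using assms(2) y by (simp add: mrg_PiE)
  moreover have "(\<Prod>i\<in>S. kE \<mu> (undefined) (y i)) \<ge> 0"
    using kE_nonneg[OF assms(1)] by (intro prod_nonneg) auto
  ultimately show "(\<Prod>i\<in>S. kE \<mu> ((\<lambda>_. undefined) i) (y i)) * F (mrg S (\<lambda>_. undefined) y)
     \<le> (\<Prod>i\<in>S. kE \<mu> ((\<lambda>_. undefined) i) (y i)) * G (mrg S (\<lambda>_. undefined) y)"
    by (simp add: mult_left_mono)
qed

lemma T_op_KJ:
  assumes "x \<in> PiE {..<n} (\<lambda>_. UNIV)"
  shows "T_op \<mu> n \<rho> f x = KJ (kT \<mu> \<rho>) {..<n} f x"
  unfolding T_op_def KJ_def kT_def
proof (intro sum.cong refl)
  fix y :: "nat \<Rightarrow> 'a" assume "y \<in> PiE {..<n} (\<lambda>_. UNIV)"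
  moreover have "\<forall>j. j \<notin> {..<n} \<longrightarrow> x j = undefined" using assms by (auto simp: PiE_def extensional_def)
  ultimately show "(\<Prod>i<n. \<rho> * (if y i = x i then 1 else 0) + (1 - \<rho>) * \<mu> (y i)) * f y =
         (\<Prod>i<n. \<rho> * (if y i = x i then 1 else 0) + (1 - \<rho>) * \<mu> (y i)) * f (mrg {..<n} x y)"
    by (simp add: mrg_PiE)
qed

lemma D_norm:
  assumes "S \<subseteq> J" "x \<in> PiE S (\<lambda>_. UNIV)"
  shows "KJ (kE \<mu>) (J - S) (\<lambda>w. (LS_op \<mu> S f w)\<^sup>2) x = expect_on \<mu> (J - S) (\<lambda>y. (D_op \<mu> S x f y)\<^sup>2)"
  unfolding KJ_def expect_on_def D_op_def kE_def
proof (intro sum.cong refl)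
  fix y :: "nat \<Rightarrow> 'a" assume y: "y \<in> PiE (J - S) (\<lambda>_. UNIV)"
  have "mrg (J - S) x y = (\<lambda>i. if i \<in> S then x i else y i)"
    using assms y by (auto simp: mrg_def fun_eq_iff PiE_def extensional_def)
  then show "(\<Prod>i\<in>J - S. \<mu> (y i)) * (LS_op \<mu> S f (mrg (J - S) x y))\<^sup>2 =
         (\<Prod>i\<in>J - S. \<mu> (y i)) * (LS_op \<mu> S f (\<lambda>i. if i \<in> S then x i else y i))\<^sup>2" by simp
qed

lemma expect_nonneg: "fin_prob \<mu> \<Longrightarrow> (\<And>y. g y \<ge> 0) \<Longrightarrow> expect_on \<mu> I g \<ge> 0"
  unfolding expect_on_KJ by (intro KJ_nonneg kE_nonneg) auto

lemma powr_split_bound: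
  fixes N M p :: real
  assumes "0 \<le> N" "N \<le> M" "p \<ge> 1"
  shows "N powr p \<le> N * M powr (p - 1)"
proof (cases "N = 0")
  case True then show ?thesis by simp
next
  case False
  have "N powr p = N powr (1 + (p - 1))" by simp
  also have "\<dots> = N powr 1 * N powr (p - 1)" by (rule powr_add)
  also have "\<dots> = N * N powr (p - 1)" using assms by simp
  also have "\<dots> \<le> N * M powr (p - 1)"
    using assms by (intro mult_left_mono powr_mono2) auto
  finally show ?thesis .
qed


lemma KJ_cong_b0:
  assumes "fin_prob \<mu>" "\<And>x. x \<in> PiE S (\<lambda>_. UNIV) \<Longrightarrow> F x = G x"
  shows "KJ (kE \<mu>) S F (\<lambda>_. undefined) = KJ (kE \<mu>) S G (\<lambda>_. undefined)"
  using KJ_mono_b0[OF assms(1), of S F G] KJ_mono_b0[OF assms(1), of S G F] assms(2) by force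

lemma abs_powr_sq: "\<bar>a::real\<bar> powr q = (a\<^sup>2) powr (q/2)"
proof (cases "a = 0")
  case True then show ?thesis by simp
next
  case False
  then have "a\<^sup>2 = \<bar>a\<bar> powr 2" by (simp add: powr_realpow[of "\<bar>a\<bar>" 2, simplified])
  moreover have "(\<bar>a\<bar> powr 2) powr (q/2) = \<bar>a\<bar> powr (2 * (q/2))" by (rule powr_powr)
  ultimately show ?thesis by simp
qed

lemma keyM:
  fixes r \<gamma> q :: real
  assumes "r > 0" "\<gamma> > 0"
  shows "((r ^ k * \<gamma>)\<^sup>2) powr (q/2 - 1) = (r powr (q - 2)) ^ k * \<gamma> powr (q - 2)"
proof -
  have pos: "r ^ k * \<gamma> > 0" using assms by simp
  have "((r ^ k * \<gamma>)\<^sup>2) powr (q/2 - 1) = ((r ^ k * \<gamma>) powr 2) powr (q/2 - 1)"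
    using powr_realpow[OF pos, of 2] by simp
  also have "\<dots> = (r ^ k * \<gamma>) powr (q - 2)" by (simp add: powr_powr algebra_simps)
  also have "\<dots> = (r ^ k) powr (q - 2) * \<gamma> powr (q - 2)" by (rule powr_mult)
  also have "(r ^ k) powr (q - 2) = (r powr (q - 2)) ^ k"
    using assms by (induction k) (simp_all add: powr_mult)
  finally show ?thesis .
qed

lemma final_param:
  fixes \<mu> :: "'a::finite \<Rightarrow> real" and f :: "(nat \<Rightarrow> 'a) \<Rightarrow> real"
  assumes mu: "fin_prob \<mu>" and r0: "r > 0" and g0: "\<gamma> > 0" and q2: "q \<ge> 2"
    and glob: "L2_global \<mu> n r \<gamma> f"
    and H: "Hscal \<mu> (q/2) \<rho> \<sigma> \<beta>" and b0: "\<beta> \<ge> 0" and sb: "\<sigma>\<^sup>2 + \<beta> * r powr (q - 2) \<le> 1"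
  shows "normq_pow \<mu> n q (T_op \<mu> n \<rho> f) \<le> (norm2_on \<mu> {..<n} f)\<^sup>2 * \<gamma> powr (q - 2)"
proof -
  define J where "J = {..<n}"
  define b where "b = (\<lambda>_::nat. undefined :: 'a)"
  define p where "p = q/2"
  define c where "c = \<beta> * r powr (q - 2)"
  have c0: "c \<ge> 0" unfolding c_def using b0 by simp
  have s1: "\<sigma>\<^sup>2 \<le> 1" using sb c0 unfolding c_def by linarith
  have finJ: "finite J" unfolding J_def by simp
  note kpos = kE_nonneg[OF mu]
  have "normq_pow \<mu> n q (T_op \<mu> n \<rho> f) = KJ (kE \<mu>) J (\<lambda>w. \<bar>T_op \<mu> n \<rho> f w\<bar> powr q) b"
    unfolding normq_pow_def expect_on_KJ J_def b_def ..
  also have "\<dots> = KJ (kE \<mu>) J (\<lambda>w. ((KJ (kT \<mu> \<rho>) J f w)\<^sup>2) powr p) b"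
    unfolding b_def p_def J_def by (intro KJ_cong_b0 mu) (simp add: T_op_KJ abs_powr_sq)
  also have "\<dots> \<le> (\<Sum>S\<in>Pow J. \<beta> ^ card S * KJ (kE \<mu>) S (\<lambda>w. Nq \<mu> \<sigma> J S f w powr p) b)"
    by (rule claimC[OF mu H[folded p_def] b0 finJ])
  also have "\<dots> \<le> (\<Sum>S\<in>Pow J. \<beta> ^ card S * ((r powr (q - 2)) ^ card S * \<gamma> powr (q - 2) * KJ (kE \<mu>) S (Nq \<mu> \<sigma> J S f) b))"
  proof (intro sum_mono mult_left_mono zero_le_power b0)
    fix S assume S: "S \<in> Pow J"
    have fS: "finite S" using S finJ finite_subset by auto
    define K where "K = (r powr (q - 2)) ^ card S * \<gamma> powr (q - 2)"
    have "KJ (kE \<mu>) S (\<lambda>w. Nq \<mu> \<sigma> J S f w powr p) b \<le> KJ (kE \<mu>) S (\<lambda>w. K * Nq \<mu> \<sigma> J S f w) b"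
      unfolding b_def
    proof (rule KJ_mono_b0[OF mu])
      fix x :: "nat \<Rightarrow> 'a" assume x: "x \<in> PiE S (\<lambda>_. UNIV)"
      have N0: "Nq \<mu> \<sigma> J S f x \<ge> 0" unfolding Nq_def by (intro KJ_nonneg kpos) auto
      have "Nq \<mu> \<sigma> J S f x \<le> KJ (kE \<mu>) (J - S) (\<lambda>w. (LS_op \<mu> S f w)\<^sup>2) x"
        unfolding Nq_def using finJ by (intro contraction mu s1) auto
      also have "\<dots> = (norm2_on \<mu> (J - S) (D_op \<mu> S x f))\<^sup>2"
        using S x by (simp add: D_norm norm2_on_def expect_nonneg[OF mu])
      also have "\<dots> \<le> (r ^ card S * \<gamma>)\<^sup>2"
      proof (rule power_mono)
        show "norm2_on \<mu> (J - S) (D_op \<mu> S x f) \<le> r ^ card S * \<gamma>"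
          using glob S x unfolding L2_global_def J_def by auto
        show "0 \<le> norm2_on \<mu> (J - S) (D_op \<mu> S x f)" by (simp add: norm2_on_def expect_nonneg[OF mu])
      qed
      finally have NM: "Nq \<mu> \<sigma> J S f x \<le> (r ^ card S * \<gamma>)\<^sup>2" .
      have "Nq \<mu> \<sigma> J S f x powr p \<le> Nq \<mu> \<sigma> J S f x * ((r ^ card S * \<gamma>)\<^sup>2) powr (p - 1)"
        using N0 NM q2 unfolding p_def by (intro powr_split_bound) auto
      also have "\<dots> = K * Nq \<mu> \<sigma> J S f x"
        unfolding K_def p_def using keyM[OF r0 g0] by simp
      finally show "Nq \<mu> \<sigma> J S f x powr p \<le> K * Nq \<mu> \<sigma> J S f x" .
    qed
    also have "\<dots> = K * KJ (kE \<mu>) S (Nq \<mu> \<sigma> J S f) b" by (rule KJ_cmult)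
    finally show "KJ (kE \<mu>) S (\<lambda>w. Nq \<mu> \<sigma> J S f w powr p) b \<le> (r powr (q - 2)) ^ card S * \<gamma> powr (q - 2) * KJ (kE \<mu>) S (Nq \<mu> \<sigma> J S f) b"
      unfolding K_def .
  qed
  also have "\<dots> = \<gamma> powr (q - 2) * (\<Sum>S\<in>Pow J. c ^ card S * KJ (kE \<mu>) J (\<lambda>w. (KJ (kT \<mu> \<sigma>) (J - S) (LS_op \<mu> S f) w)\<^sup>2) b)"
  proof -
    have "KJ (kE \<mu>) S (Nq \<mu> \<sigma> J S f) b = KJ (kE \<mu>) J (\<lambda>w. (KJ (kT \<mu> \<sigma>) (J - S) (LS_op \<mu> S f) w)\<^sup>2) b"
      if "S \<in> Pow J" for S
    proof -
      have fS: "finite S" using that finJ finite_subset by auto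
      have "J = S \<union> (J - S)" using that by auto
      then have "KJ (kE \<mu>) J (\<lambda>w. (KJ (kT \<mu> \<sigma>) (J - S) (LS_op \<mu> S f) w)\<^sup>2) b
         = KJ (kE \<mu>) S (KJ (kE \<mu>) (J - S) (\<lambda>w. (KJ (kT \<mu> \<sigma>) (J - S) (LS_op \<mu> S f) w)\<^sup>2)) b"
        using fS finJ by (metis Diff_disjoint KJ_union finite_Diff)
      then show ?thesis unfolding Nq_def[abs_def] by simp
    qed
    then show ?thesis unfolding c_def
      by (simp add: sum_distrib_left power_mult_distrib ac_simps)
  qed
  also have "\<dots> \<le> \<gamma> powr (q - 2) * KJ (kE \<mu>) J (\<lambda>w. (f w)\<^sup>2) b"
    by (intro mult_left_mono claimQ[OF mu c0 _ finJ]) (use sb c_def in auto)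
  also have "KJ (kE \<mu>) J (\<lambda>w. (f w)\<^sup>2) b = (norm2_on \<mu> {..<n} f)\<^sup>2"
    unfolding norm2_on_def J_def b_def expect_on_KJ[symmetric]
    by (simp add: expect_nonneg[OF mu])
  finally show ?thesis by (simp add: mult.commute)
qed


lemma taylor2:
  fixes x p :: real
  assumes x0: "x > 0" and x1: "x \<noteq> 1"
  shows "\<exists>\<xi>. min x 1 < \<xi> \<and> \<xi> < max x 1 \<and> x powr p = 1 + p*(x-1) + p*(p-1)/2 * \<xi> powr (p-2) * (x-1)^2"
proof -
  define diff :: "nat \<Rightarrow> real \<Rightarrow> real" where
    "diff m t = (if m = 0 then t powr p else if m = 1 then p * t powr (p-1) else p*(p-1) * t powr (p-2))" for m t
  have D: "\<forall>m t. m < 2 \<and> min x 1 \<le> t \<and> t \<le> max x 1 \<longrightarrow> DERIV (diff m) t :> diff (Suc m) t"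
  proof (intro allI impI)
    fix m :: nat and t :: real assume a: "m < 2 \<and> min x 1 \<le> t \<and> t \<le> max x 1"
    then have t0: "t > 0" using x0 by (auto simp: min_def split: if_splits)
    show "DERIV (diff m) t :> diff (Suc m) t"
    proof (cases "m = 0")
      case True
      have "diff 0 = (\<lambda>t. t powr p)" by (simp add: diff_def fun_eq_iff)
      then show ?thesis using True has_real_derivative_powr[OF t0, of p] by (simp add: diff_def)
    next
      case False
      then have m1: "m = 1" using a by auto
      have "diff 1 = (\<lambda>t. p * t powr (p - 1))" by (simp add: diff_def fun_eq_iff)
      moreover have "DERIV (\<lambda>t. p * t powr (p - 1)) t :> p * ((p - 1) * t powr (p - 1 - 1))"
        by (intro DERIV_cmult has_real_derivative_powr t0)
      moreover have "p - 1 - 1 = p - 2" by simp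
      ultimately show ?thesis using m1 by (simp add: diff_def mult.assoc)
    qed
  qed
  have "\<exists>t. (if x < 1 then x < t \<and> t < 1 else 1 < t \<and> t < x) \<and>
    (\<lambda>t. t powr p) x = (\<Sum>m<2. (diff m 1 / fact m) * (x - 1)^m) + (diff 2 t / fact 2) * (x - 1)^2"
  proof -
    have d0: "diff 0 = (\<lambda>t. t powr p)" by (simp add: diff_def fun_eq_iff)
    show ?thesis by (rule Taylor[where a = "min x 1" and b = "max x 1", OF _ d0 D]) (use x1 in auto)
  qed
  then obtain t where t: "(if x < 1 then x < t \<and> t < 1 else 1 < t \<and> t < x)"
    and e: "x powr p = (\<Sum>m<2. (diff m 1 / fact m) * (x - 1)^m) + (diff 2 t / fact 2) * (x - 1)^2" by auto
  have "(\<Sum>m<2. (diff m 1 / fact m) * (x - 1)^m) = 1 + p * (x - 1)"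
    by (simp add: diff_def numeral_2_eq_2)
  moreover have "diff 2 t / fact 2 = p*(p-1)/2 * t powr (p-2)" by (simp add: diff_def)
  ultimately have "x powr p = 1 + p*(x-1) + p*(p-1)/2 * t powr (p-2) * (x-1)^2" using e by simp
  moreover have "min x 1 < t \<and> t < max x 1" using t by (auto split: if_splits)
  ultimately show ?thesis by blast
qed


lemma powr_split1:
  fixes y p :: real
  assumes "y > 0"
  shows "y powr p = y * y powr (p - 1)"
proof -
  have "y powr p = y powr (1 + (p - 1))" by simp
  also have "\<dots> = y powr 1 * y powr (p - 1)" by (rule powr_add)
  also have "\<dots> = y * y powr (p - 1)" using assms by simp
  finally show ?thesis .
qed

lemma breg:
  fixes p u \<delta> :: real
  assumes p1: "p \<ge> 1" and u1: "u \<ge> -1" and ud: "u \<le> \<delta>" and d0: "\<delta> \<ge> 0"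
  shows "(1+u) powr p - 1 - p*u \<le> p*(p-1)*max 1 ((1+\<delta>) powr (p-2)) * u\<^sup>2"
proof -
  define F where "F = max 1 ((1+\<delta>) powr (p-2))"
  have F1: "F \<ge> 1" unfolding F_def by simp
  have pp: "p*(p-1) \<ge> 0" using p1 by simp
  have R0: "p*(p-1)*F*u\<^sup>2 \<ge> 0" using pp F1 by simp
  have keyF: "p - 1 \<le> p*(p-1)*F"
  proof -
    have pF: "p*F \<ge> 1" using p1 F1 mult_mono[of 1 p 1 F] by simp
    have "(p-1)*1 \<le> (p-1)*(p*F)" using p1 pF by (intro mult_left_mono) auto
    then show ?thesis by (simp add: ac_simps)
  qed
  consider "u = 0" | "u = -1" | "-1 < u \<and> u < 0 \<and> p < 2" | "-1 < u \<and> u \<noteq> 0 \<and> (u > 0 \<or> p \<ge> 2)"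
    using u1 by linarith
  then have "(1+u) powr p - 1 - p*u \<le> p*(p-1)*F*u\<^sup>2"
  proof cases
    case 1 then show ?thesis using R0 by simp
  next
    case 2
    have "p - 1 \<le> p*(p-1)*F" by (rule keyF)
    then show ?thesis using 2 by simp
  next
    case 3
    have y0: "1 + u > 0" using 3 by simp
    have "(1+u) powr (p-1) * 1 powr (2-p) \<le> (p-1)*(1+u) + (2-p)*1"
      using 3 p1 y0 by (intro Youngs_inequality_0) auto
    then have Y: "(1+u) powr (p-1) \<le> 1 + (p-1)*u" by (simp add: algebra_simps)
    have "(1+u) powr p = (1+u) * (1+u) powr (p-1)" using y0 by (rule powr_split1)
    also have "\<dots> \<le> (1+u) * (1 + (p-1)*u)" using Y y0 by (intro mult_left_mono) auto
    finally have "(1+u) powr p - 1 - p*u \<le> (p-1)*u\<^sup>2" by (simp add: algebra_simps power2_eq_square)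
    also have "\<dots> \<le> p*(p-1)*F*u\<^sup>2"
    proof -
      have "(p-1) \<le> p*(p-1)*F" by (rule keyF)
      then show ?thesis by (intro mult_right_mono) auto
    qed
    finally show ?thesis .
  next
    case 4
    have y0: "1 + u > 0" and y1: "1 + u \<noteq> 1" using 4 by auto
    obtain \<xi> where xi: "min (1+u) 1 < \<xi>" "\<xi> < max (1+u) 1"
      and e: "(1+u) powr p = 1 + p*((1+u)-1) + p*(p-1)/2 * \<xi> powr (p-2) * ((1+u)-1)^2"
      using taylor2[OF y0 y1, of p] by blast
    have xi0: "\<xi> > 0" using xi y0 by (auto simp: min_def split: if_splits)
    have xiF: "\<xi> powr (p-2) \<le> F"
    proof (cases "p \<ge> 2")
      case True
      have "\<xi> \<le> 1 + \<delta>" using xi ud d0 by (auto simp: max_def split: if_splits)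
      then have "\<xi> powr (p-2) \<le> (1+\<delta>) powr (p-2)" using True xi0 by (intro powr_mono2) auto
      then show ?thesis unfolding F_def by simp
    next
      case False
      then have "u > 0" using 4 by auto
      then have "\<xi> \<ge> 1" using xi by (auto simp: min_def)
      then have "\<xi> powr (p-2) \<le> \<xi> powr 0" using False by (intro powr_mono) auto
      then show ?thesis using F1 xi0 by simp
    qed
    have "(1+u) powr p - 1 - p*u = p*(p-1)/2 * \<xi> powr (p-2) * u\<^sup>2" using e by simp
    also have "\<dots> \<le> p*(p-1)/2 * F * u\<^sup>2" using xiF pp by (intro mult_right_mono mult_left_mono) auto
    also have "\<dots> \<le> p*(p-1)*F*u\<^sup>2" using R0 by (simp add: ac_simps)
    finally show ?thesis .
  qed
  then show ?thesis unfolding F_def .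
qed


lemma sq_powr: "(a\<^sup>2) powr p = \<bar>a::real\<bar> powr (2*p)"
proof (cases "a = 0")
  case True then show ?thesis by simp
next
  case False
  then have "a\<^sup>2 = \<bar>a\<bar> powr 2" by (simp add: powr_realpow[of "\<bar>a\<bar>" 2, simplified])
  moreover have "(\<bar>a\<bar> powr 2) powr p = \<bar>a\<bar> powr (2 * p)" by (rule powr_powr)
  ultimately show ?thesis by simp
qed

lemma pointP:
  fixes p \<rho> w0 s t c :: real
  assumes p1: "p \<ge> 1" and w0: "w0 > 0" and s0: "s \<ge> 0" and t0: "t \<ge> 0" and cs: "c\<^sup>2 \<le> s * t" and r0: "\<rho> \<ge> 0"
  defines "A \<equiv> p*(p-1)*max 1 ((1+(2*w0+w0\<^sup>2)) powr (p-2))*(2+w0)\<^sup>2"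
      and "B \<equiv> ((1+w0) powr (2*p) + (p-1)) / w0 powr (2*p)"
  shows "(s + 2*\<rho>*c + \<rho>\<^sup>2*t) powr p \<le> s powr p + p * s powr (p-1) * ((s + 2*\<rho>*c + \<rho>\<^sup>2*t) - s)
           + A*\<rho>\<^sup>2 * (s powr (p-1) * t) + B * (\<rho>\<^sup>2) powr p * t powr p"
proof -
  define X where "X = s + 2*\<rho>*c + \<rho>\<^sup>2*t"
  define F where "F = max 1 ((1+(2*w0+w0\<^sup>2)) powr (p-2))"
  have F1: "F \<ge> 1" unfolding F_def by simp
  have A0: "A \<ge> 0" unfolding A_def F_def[symmetric] using p1 F1 by simp
  have B1: "B \<ge> 1"
  proof -
    have "w0 powr (2*p) \<le> (1+w0) powr (2*p)" using w0 p1 by (intro powr_mono2) auto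
    moreover have "w0 powr (2*p) > 0" using w0 by simp
    ultimately have "1 \<le> (1+w0) powr (2*p) / w0 powr (2*p)" by simp
    moreover have "(1+w0) powr (2*p) / w0 powr (2*p) \<le> B" unfolding B_def using p1 w0
      by (intro divide_right_mono) auto
    ultimately show ?thesis by linarith
  qed
  have absc: "\<bar>c\<bar> \<le> sqrt s * sqrt t"
  proof -
    have "\<bar>c\<bar> = sqrt (c\<^sup>2)" by simp
    also have "\<dots> \<le> sqrt (s*t)" by (rule real_sqrt_le_mono[OF cs])
    also have "\<dots> = sqrt s * sqrt t" by (rule real_sqrt_mult)
    finally show ?thesis .
  qed
  have X0: "X \<ge> 0"
  proof -
    have "-(sqrt s * sqrt t) \<le> c" using absc by linarith
    then have "\<rho> * (-(sqrt s * sqrt t)) \<le> \<rho> * c" using r0 by (rule mult_left_mono)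
    then have "X \<ge> s - 2*\<rho>*(sqrt s * sqrt t) + \<rho>\<^sup>2*t"
      unfolding X_def by simp
    also have "s - 2*\<rho>*(sqrt s * sqrt t) + \<rho>\<^sup>2*t = (sqrt s - \<rho> * sqrt t)\<^sup>2"
      using s0 t0 by (simp add: power2_eq_square algebra_simps)
    finally show ?thesis by (metis order_trans zero_le_power2)
  qed
  have RHSge: "A*\<rho>\<^sup>2 * (s powr (p-1) * t) \<ge> 0" "B * (\<rho>\<^sup>2) powr p * t powr p \<ge> 0"
    using A0 B1 t0 by auto
  have "X powr p \<le> s powr p + p * s powr (p-1) * (X - s) + A*\<rho>\<^sup>2 * (s powr (p-1) * t) + B * (\<rho>\<^sup>2) powr p * t powr p"
  proof (cases "s = 0")
    case True
    then have c0: "c = 0" using cs by simp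
    then have Xe: "X = \<rho>\<^sup>2 * t" using True by (simp add: X_def)
    then have "X powr p = (\<rho>\<^sup>2) powr p * t powr p" by (simp add: powr_mult)
    also have "\<dots> \<le> B * (\<rho>\<^sup>2) powr p * t powr p"
    proof -
      have "1 * ((\<rho>\<^sup>2) powr p * t powr p) \<le> B * ((\<rho>\<^sup>2) powr p * t powr p)"
        by (rule mult_right_mono[OF B1]) simp
      then show ?thesis by (simp add: ac_simps)
    qed
    finally show ?thesis using True RHSge p1 c0 Xe by simp
  next
    case False
    then have sp: "s > 0" using s0 by simp
    define w where "w = \<rho> * sqrt t / sqrt s"
    have wge: "w \<ge> 0" unfolding w_def using r0 t0 s0 by simp
    have "w\<^sup>2 = \<rho>\<^sup>2 * t / s" unfolding w_def using t0 s0 by (simp add: power_divide power_mult_distrib)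
    then have sw2: "s * w\<^sup>2 = \<rho>\<^sup>2 * t" using sp by simp
    define u where "u = (X - s) / s"
    have Xu: "X = s * (1 + u)" unfolding u_def using sp by (simp add: field_simps)
    have "0 \<le> s * (1+u)" using X0 Xu by simp
    then have "0 \<le> 1 + u" using sp by (simp add: zero_le_mult_iff)
    then have u1: "u \<ge> -1" by simp
    have uabs: "\<bar>u\<bar> \<le> 2*w + w\<^sup>2"
    proof -
      have "\<bar>2*\<rho>*c\<bar> \<le> 2*\<rho>*(sqrt s * sqrt t)" using absc r0 by (simp add: abs_mult mult_left_mono)
      also have "2*\<rho>*(sqrt s * sqrt t) = s * (2*w)"
      proof -
        have "s * (2*w) = 2*\<rho>* sqrt t * (s / sqrt s)" unfolding w_def by simp
        also have "s / sqrt s = sqrt s" using s0 by (rule real_div_sqrt)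
        finally show ?thesis by simp
      qed
      finally have c2: "\<bar>2*\<rho>*c\<bar> \<le> s * (2*w)" .
      have "\<bar>X - s\<bar> = \<bar>2*\<rho>*c + \<rho>\<^sup>2*t\<bar>" unfolding X_def by simp
      also have "\<dots> \<le> \<bar>2*\<rho>*c\<bar> + \<bar>\<rho>\<^sup>2*t\<bar>" by (rule abs_triangle_ineq)
      also have "\<bar>\<rho>\<^sup>2*t\<bar> = s * w\<^sup>2" using sw2 t0 by simp
      finally have "\<bar>X - s\<bar> \<le> s * (2*w) + s * w\<^sup>2" using c2 by linarith
      then have "\<bar>X - s\<bar> \<le> (2*w + w\<^sup>2) * s" by (simp add: algebra_simps)
      then have "\<bar>X - s\<bar> / s \<le> 2*w + w\<^sup>2" using sp by (simp add: pos_divide_le_eq)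
      moreover have "\<bar>u\<bar> = \<bar>X - s\<bar> / s" unfolding u_def using sp by (simp add: abs_divide)
      ultimately show ?thesis by simp
    qed
    have Deq: "X powr p - s powr p - p * s powr (p-1) * (X - s) = s powr p * ((1+u) powr p - 1 - p*u)"
    proof -
      have e1: "X powr p = s powr p * (1+u) powr p" unfolding Xu by (rule powr_mult)
      have e2: "s powr (p-1) * (X - s) = s powr p * u"
      proof -
        have "X - s = s * u" unfolding Xu by (simp add: algebra_simps)
        then have "s powr (p-1) * (X - s) = (s * s powr (p-1)) * u" by simp
        also have "s * s powr (p-1) = s powr p" using powr_split1[OF sp, of p] by simp
        finally show ?thesis .
      qed
      have e3: "p * s powr (p-1) * (X - s) = p * (s powr p * u)" using e2 by (simp add: mult.assoc)
      have "X powr p - s powr p - p * s powr (p-1) * (X - s) = s powr p * (1+u) powr p - s powr p - p * (s powr p * u)"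
        using e1 e3 by simp
      also have "\<dots> = s powr p * ((1+u) powr p - 1 - p*u)" by (simp add: algebra_simps)
      finally show ?thesis .
    qed
    have sp0: "s powr p > 0" using sp by simp
    have "s powr p * ((1+u) powr p - 1 - p*u) \<le> A*\<rho>\<^sup>2 * (s powr (p-1) * t) + B * (\<rho>\<^sup>2) powr p * t powr p"
    proof (cases "w \<le> w0")
      case True
      have ud: "u \<le> 2*w0 + w0\<^sup>2"
      proof -
        have "2*w + w\<^sup>2 \<le> 2*w0 + w0\<^sup>2" using True wge by (intro add_mono power_mono) auto
        then show ?thesis using uabs by simp
      qed
      have "(1+u) powr p - 1 - p*u \<le> p*(p-1)*F*u\<^sup>2"
        unfolding F_def using breg[OF p1 u1 ud] w0 by simp
      also have "\<dots> \<le> p*(p-1)*F*(w\<^sup>2*(2+w0)\<^sup>2)"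
      proof -
        have "u\<^sup>2 \<le> (2*w + w\<^sup>2)\<^sup>2" using uabs by (metis abs_le_square_iff abs_of_nonneg add_nonneg_nonneg mult_nonneg_nonneg wge zero_le_power2 zero_le_numeral)
        also have "(2*w + w\<^sup>2)\<^sup>2 = w\<^sup>2 * (2 + w)\<^sup>2" by (simp add: power2_eq_square algebra_simps)
        also have "\<dots> \<le> w\<^sup>2 * (2+w0)\<^sup>2" using True wge by (intro mult_left_mono power_mono) auto
        finally show ?thesis using p1 F1 by (intro mult_left_mono) auto
      qed
      also have "\<dots> = A * w\<^sup>2" unfolding A_def F_def by simp
      finally have "s powr p * ((1+u) powr p - 1 - p*u) \<le> s powr p * (A * w\<^sup>2)"
        using sp0 by (simp add: mult_left_mono)
      also have "s powr p * (A * w\<^sup>2) = A * \<rho>\<^sup>2 * (s powr (p-1) * t)"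
      proof -
        have "s powr p * (A * w\<^sup>2) = A * (s powr (p-1) * (s * w\<^sup>2))"
          using powr_split1[OF sp, of p] by (simp add: ac_simps)
        then show ?thesis using sw2 by (simp add: ac_simps)
      qed
      finally show ?thesis using RHSge by linarith
    next
      case False
      then have ww: "w > w0" by simp
      have "p*(-u) \<le> p*1" using u1 p1 by (intro mult_left_mono) auto
      then have "(1+u) powr p - 1 - p*u \<le> (1+u) powr p + (p - 1)" by simp
      also have "(1+u) powr p \<le> ((1+w)\<^sup>2) powr p"
      proof (rule powr_mono2)
        have "u \<le> 2*w + w\<^sup>2" using uabs by simp
        then show "1 + u \<le> (1+w)\<^sup>2" by (simp add: power2_eq_square algebra_simps)
      qed (use u1 p1 in auto)
      also have "((1+w)\<^sup>2) powr p = (1+w) powr (2*p)" using wge by (simp add: sq_powr)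
      also have "(1+w) powr (2*p) \<le> ((1+w0)/w0 * w) powr (2*p)"
      proof (rule powr_mono2)
        show "1 + w \<le> (1+w0)/w0 * w" using w0 ww by (simp add: field_simps)
      qed (use p1 wge in auto)
      also have "((1+w0)/w0 * w) powr (2*p) = (1+w0) powr (2*p) / w0 powr (2*p) * w powr (2*p)"
        by (simp add: powr_mult powr_divide)
      also have "p - 1 \<le> (p - 1) / w0 powr (2*p) * w powr (2*p)"
      proof -
        have "w0 powr (2*p) \<le> w powr (2*p)" using ww w0 p1 by (intro powr_mono2) auto
        then have "1 \<le> w powr (2*p) / w0 powr (2*p)" using w0 by simp
        then have "(p-1) * 1 \<le> (p-1) * (w powr (2*p) / w0 powr (2*p))" using p1 by (intro mult_left_mono) auto
        then show ?thesis by simp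
      qed
      finally have fin1: "(1+u) powr p - 1 - p*u \<le> (1+w0) powr (2*p) / w0 powr (2*p) * w powr (2*p) + (p - 1) / w0 powr (2*p) * w powr (2*p)" by auto
      have "(1+w0) powr (2*p) / w0 powr (2*p) * w powr (2*p) + (p - 1) / w0 powr (2*p) * w powr (2*p) = B * w powr (2*p)"
        unfolding B_def by (simp add: add_divide_distrib distrib_right)
      then have "(1+u) powr p - 1 - p*u \<le> B * w powr (2*p)" using fin1 by linarith
      then have "s powr p * ((1+u) powr p - 1 - p*u) \<le> s powr p * (B * w powr (2*p))"
        using sp0 by (simp add: mult_left_mono)
      also have "s powr p * (B * w powr (2*p)) = B * (\<rho>\<^sup>2) powr p * t powr p"
      proof -
        have "s powr p * w powr (2*p) = (s * w\<^sup>2) powr p" using wge by (simp add: powr_mult sq_powr)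
        also have "\<dots> = (\<rho>\<^sup>2) powr p * t powr p" by (simp add: sw2 powr_mult)
        finally show ?thesis by (simp add: algebra_simps)
      qed
      finally show ?thesis using RHSge by linarith
    qed
    then show ?thesis using Deq by linarith
  qed
  then show ?thesis unfolding X_def .
qed


lemma bern_powr:
  fixes p s v :: real
  assumes p1: "p \<ge> 1" and s0: "s \<ge> 0" and v0: "v \<ge> 0"
  shows "s powr p + p * s powr (p-1) * v \<le> (s + v) powr p"
proof (cases "s = 0 \<or> v = 0")
  case True
  then show ?thesis using p1 by auto
next
  case False
  then have sp: "s > 0" and vp: "v > 0" using s0 v0 by auto
  define x where "x = 1 + v / s"
  have "v / s > 0" using sp vp by simp
  then have x0: "x > 0" and x1: "x \<noteq> 1" unfolding x_def by auto
  obtain \<xi> where xi: "min x 1 < \<xi>" and e: "x powr p = 1 + p*(x-1) + p*(p-1)/2 * \<xi> powr (p-2) * (x-1)^2"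
    using taylor2[OF x0 x1, of p] by blast
  have "p*(p-1)/2 * \<xi> powr (p-2) * (x-1)^2 \<ge> 0" using p1 by simp
  then have ge: "x powr p \<ge> 1 + p*(v/s)" using e unfolding x_def by simp
  have sx: "s + v = s * x" unfolding x_def using sp by (simp add: field_simps)
  have "(s + v) powr p = s powr p * x powr p" unfolding sx by (rule powr_mult)
  also have "\<dots> \<ge> s powr p * (1 + p*(v/s))" using ge sp by (intro mult_left_mono) auto
  finally have "s powr p * (1 + p*(v/s)) \<le> (s + v) powr p" .
  moreover have "s powr p * (1 + p*(v/s)) = s powr p + p * s powr (p-1) * v"
  proof -
    have "s powr p = s * s powr (p-1)" using powr_split1[OF sp] .
    then show ?thesis using sp by (simp add: field_simps)
  qed
  ultimately show ?thesis by simp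
qed

lemma Hsum:
  fixes \<mu> :: "'a::finite \<Rightarrow> real" and p \<rho> \<sigma> w0 s :: real and t cc :: "'a \<Rightarrow> real"
  assumes mu0: "\<And>a. \<mu> a \<ge> 0" and mu1: "(\<Sum>a\<in>UNIV. \<mu> a) = 1"
    and p1: "p \<ge> 1" and w0: "w0 > 0" and r0: "\<rho> \<ge> 0" and s0: "s \<ge> 0" and t0: "\<And>z. t z \<ge> 0"
    and c0: "(\<Sum>z\<in>UNIV. \<mu> z * cc z) = 0" and cs: "\<And>z. (cc z)\<^sup>2 \<le> s * t z"
    and sig: "(p + p*(p-1)*max 1 ((1+(2*w0+w0\<^sup>2)) powr (p-2))*(2+w0)\<^sup>2) * \<rho>\<^sup>2 \<le> p * \<sigma>\<^sup>2"
  shows "(\<Sum>z\<in>UNIV. \<mu> z * (s + 2*\<rho>*cc z + \<rho>\<^sup>2 * t z) powr p)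
     \<le> (s + \<sigma>\<^sup>2 * (\<Sum>z\<in>UNIV. \<mu> z * t z)) powr p
       + (((1+w0) powr (2*p) + (p-1)) / w0 powr (2*p) * (\<rho>\<^sup>2) powr p) * (\<Sum>z\<in>UNIV. \<mu> z * (t z powr p))"
proof -
  define A where "A = p*(p-1)*max 1 ((1+(2*w0+w0\<^sup>2)) powr (p-2))*(2+w0)\<^sup>2"
  define B where "B = ((1+w0) powr (2*p) + (p-1)) / w0 powr (2*p)"
  define T where "T = (\<Sum>z\<in>UNIV. \<mu> z * t z)"
  define U where "U = (\<Sum>z\<in>UNIV. \<mu> z * (t z powr p))"
  define X where "X z = s + 2*\<rho>*cc z + \<rho>\<^sup>2 * t z" for z
  have T0: "T \<ge> 0" unfolding T_def using mu0 t0 by (intro sum_nonneg) auto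
  have A0: "A \<ge> 0" unfolding A_def using p1 by simp
  have pt: "X z powr p \<le> s powr p + p * s powr (p-1) * (X z - s) + A*\<rho>\<^sup>2 * (s powr (p-1) * t z) + B * (\<rho>\<^sup>2) powr p * t z powr p" for z
    unfolding X_def A_def B_def by (rule pointP[OF p1 w0 s0 t0 cs r0])
  have "(\<Sum>z\<in>UNIV. \<mu> z * X z powr p) \<le> (\<Sum>z\<in>UNIV. \<mu> z * (s powr p + p * s powr (p-1) * (X z - s) + A*\<rho>\<^sup>2 * (s powr (p-1) * t z) + B * (\<rho>\<^sup>2) powr p * t z powr p))"
    using pt mu0 by (intro sum_mono mult_left_mono) auto
  also have "\<dots> = s powr p * (\<Sum>z\<in>UNIV. \<mu> z) + (p * s powr (p-1)) * (\<Sum>z\<in>UNIV. \<mu> z * (X z - s))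
      + (A*\<rho>\<^sup>2 * s powr (p-1)) * T + (B * (\<rho>\<^sup>2) powr p) * U"
    unfolding T_def U_def by (simp add: sum.distrib sum_distrib_left sum_distrib_right distrib_left ac_simps)
  also have "(\<Sum>z\<in>UNIV. \<mu> z * (X z - s)) = 2*\<rho> * (\<Sum>z\<in>UNIV. \<mu> z * cc z) + \<rho>\<^sup>2 * T"
    unfolding T_def X_def by (simp add: sum.distrib sum_distrib_left distrib_left ac_simps)
  finally have L: "(\<Sum>z\<in>UNIV. \<mu> z * X z powr p) \<le> s powr p + ((p + A) * \<rho>\<^sup>2) * (s powr (p-1) * T) + (B * (\<rho>\<^sup>2) powr p) * U"
    using mu1 c0 by (simp add: algebra_simps)
  have "((p + A) * \<rho>\<^sup>2) * (s powr (p-1) * T) \<le> (p * \<sigma>\<^sup>2) * (s powr (p-1) * T)"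
    using sig T0 unfolding A_def by (intro mult_right_mono) auto
  also have "\<dots> = p * s powr (p-1) * (\<sigma>\<^sup>2 * T)" by simp
  finally have "s powr p + ((p + A) * \<rho>\<^sup>2) * (s powr (p-1) * T) \<le> (s + \<sigma>\<^sup>2 * T) powr p"
    using bern_powr[OF p1 s0, of "\<sigma>\<^sup>2 * T"] T0 by simp
  then show ?thesis using L unfolding X_def T_def U_def B_def by simp
qed


definition Cq :: "real \<Rightarrow> real \<Rightarrow> real \<Rightarrow> real \<Rightarrow> real" where
  "Cq q w0 \<rho> r = \<rho>\<^sup>2 * (1 + (q/2 - 1) * max 1 ((1+(2*w0+w0\<^sup>2)) powr (q/2-2)) * (2+w0)\<^sup>2)
     + ((1+w0) powr q + (q/2-1)) / w0 powr q * ((\<rho>\<^sup>2) powr (q/2) * r powr (q-2))"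

lemma base_exp: fixes w0 q :: real shows "w0 \<ge> 0 \<Longrightarrow> q \<ge> 0 \<Longrightarrow> (1+w0) powr q \<le> exp (w0 * q)"
proof -
  assume a: "w0 \<ge> 0" "q \<ge> 0"
  have "(1+w0) powr q \<le> (exp w0) powr q" using a by (intro powr_mono2) auto
  also have "\<dots> = exp (w0 * q)" by (simp add: exp_powr_real)
  finally show ?thesis .
qed

lemma F_exp:
  fixes w0 q :: real
  assumes "q \<ge> 2" "w0 \<ge> 0"
  shows "max 1 ((1+(2*w0+w0\<^sup>2)) powr (q/2-2)) \<le> exp (w0 * q)"
proof -
  have e: "1+(2*w0+w0\<^sup>2) = (1+w0)\<^sup>2" by (simp add: power2_eq_square algebra_simps)
  have "((1+w0)\<^sup>2) powr (q/2-2) = \<bar>1+w0\<bar> powr (2*(q/2-2))" by (rule sq_powr)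
  also have "\<dots> = (1+w0) powr (q - 4)" using assms by (simp add: algebra_simps)
  also have "\<dots> \<le> (1+w0) powr q" using assms by (intro powr_mono) auto
  also have "\<dots> \<le> exp (w0 * q)" using assms by (intro base_exp) auto
  finally have "(1+(2*w0+w0\<^sup>2)) powr (q/2-2) \<le> exp (w0 * q)" unfolding e .
  moreover have "1 \<le> exp (w0 * q)" using assms by simp
  ultimately show ?thesis by simp
qed

lemma ln2_half: "ln 2 \<ge> (1/2::real)"
proof -
  have "exp (1/2::real) \<le> 2" using exp_bound_half[of "1/2::real"] by simp
  then have "ln (exp (1/2::real)) \<le> ln 2" by (subst ln_le_cancel_iff) auto
  then show ?thesis by simp
qed

lemma ln4_one: "ln 4 \<ge> (1::real)"
proof -
  have "exp (1::real) \<le> 4" using exp_le by simp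
  then have "ln (exp (1::real)) \<le> ln 4" by (subst ln_le_cancel_iff) auto
  then show ?thesis by simp
qed

lemma powr_ge_lin:
  fixes b y :: real
  assumes "b > 0"
  shows "b powr y \<ge> 1 + y * ln b"
proof -
  have "b powr y = exp (y * ln b)" using assms by (simp add: powr_def)
  then show ?thesis using exp_ge_add_one_self[of "y * ln b"] by simp
qed


lemma case1:
  fixes q r \<rho> :: real
  assumes q2: "q \<ge> 2" and r0: "r > 0" and rho0: "0 < \<rho>"
    and rho1: "\<rho> \<le> 1 / (3 * sqrt 2) * min (1 / (r powr ((q - 2) / q) * q)) (1 / sqrt q)"
  shows "Cq q (1/(2*q)) \<rho> r \<le> 1"
proof -
  define w0 where "w0 = 1/(2*q)"
  have w0p: "w0 > 0" and w0q: "w0 \<le> 1/4" unfolding w0_def using q2 by (auto simp: field_simps)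
  have wq: "w0 * q = 1/2" unfolding w0_def using q2 by simp
  have e2: "exp (1/2::real) \<le> 2" using exp_bound_half[of "1/2::real"] by simp
  have F2: "max 1 ((1+(2*w0+w0\<^sup>2)) powr (q/2-2)) \<le> 2" using F_exp[OF q2, of w0] w0p wq e2 by simp
  have B2: "(1+w0) powr q \<le> 2" using base_exp[of w0 q] w0p q2 wq e2 by simp
  have W2: "(2+w0)\<^sup>2 \<le> 81/16"
  proof -
    have "(2+w0)\<^sup>2 \<le> (2 + 1/4)\<^sup>2" using w0p w0q by (intro power_mono) auto
    then show ?thesis by (simp add: power2_eq_square)
  qed
  have sq: "sqrt 2 * sqrt 2 = (2::real)" by simp
  have rA: "\<rho> \<le> 1 / (3 * sqrt 2) * (1 / (r powr ((q - 2) / q) * q))"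
    using rho1 mult_left_mono[OF min.cobounded1[of "1 / (r powr ((q - 2) / q) * q)" "1 / sqrt q"], of "1 / (3 * sqrt 2)"]
    by simp
  have rB: "\<rho> \<le> 1 / (3 * sqrt 2) * (1 / sqrt q)"
    using rho1 mult_left_mono[OF min.cobounded2[of "1 / (r powr ((q - 2) / q) * q)" "1 / sqrt q"], of "1 / (3 * sqrt 2)"]
    by simp
  have rho2: "\<rho>\<^sup>2 \<le> 1/(18*q)"
  proof -
    have "\<rho> \<le> 1 / (3 * sqrt 2) * (1 / sqrt q)" by (rule rB)
    also have "\<dots> = 1 / (3 * sqrt 2 * sqrt q)" by simp
    finally have "\<rho>\<^sup>2 \<le> (1 / (3 * sqrt 2 * sqrt q))\<^sup>2" using rho0 by (intro power_mono) auto
    also have "\<dots> = 1/(18*q)" using q2 by (simp add: power2_eq_square field_simps)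
    finally show ?thesis .
  qed
  have T1: "\<rho>\<^sup>2 * (1 + (q/2 - 1) * max 1 ((1+(2*w0+w0\<^sup>2)) powr (q/2-2)) * (2+w0)\<^sup>2) \<le> 81/288"
  proof -
    have "(q/2 - 1) * max 1 ((1+(2*w0+w0\<^sup>2)) powr (q/2-2)) * (2+w0)\<^sup>2 \<le> (q/2 - 1) * 2 * (81/16)"
      using q2 F2 W2 by (intro mult_mono) auto
    then have "1 + (q/2 - 1) * max 1 ((1+(2*w0+w0\<^sup>2)) powr (q/2-2)) * (2+w0)\<^sup>2 \<le> 81/16 * q"
      using q2 by simp
    then have "\<rho>\<^sup>2 * (1 + (q/2 - 1) * max 1 ((1+(2*w0+w0\<^sup>2)) powr (q/2-2)) * (2+w0)\<^sup>2) \<le> 1/(18*q) * (81/16 * q)"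
      using rho2 q2 by (intro mult_mono) auto
    also have "\<dots> = 81/288" using q2 by simp
    finally show ?thesis .
  qed
  define c where "c = 2 / (3 * sqrt 2)"
  have c0: "c > 0" unfolding c_def by simp
  have K: "(\<rho>\<^sup>2) powr (q/2) * r powr (q-2) \<le> (1/(3 * sqrt 2 * q)) powr q"
  proof -
    have "\<rho> \<le> 1 / (3 * sqrt 2) * (1 / (r powr ((q - 2) / q) * q))" by (rule rA)
    then have "\<rho> * r powr ((q - 2) / q) \<le> 1/(3 * sqrt 2 * q)" using r0 q2 by (simp add: field_simps)
    then have "(\<rho> * r powr ((q - 2) / q)) powr q \<le> (1/(3 * sqrt 2 * q)) powr q"
      using rho0 q2 by (intro powr_mono2) auto
    moreover have "(\<rho> * r powr ((q - 2) / q)) powr q = (\<rho>\<^sup>2) powr (q/2) * r powr (q-2)"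
    proof -
      have "(\<rho> * r powr ((q - 2) / q)) powr q = \<rho> powr q * (r powr ((q - 2) / q)) powr q" by (rule powr_mult)
      also have "(r powr ((q - 2) / q)) powr q = r powr (q-2)" using q2 by (simp add: powr_powr)
      also have "\<rho> powr q = (\<rho>\<^sup>2) powr (q/2)" using sq_powr[of \<rho> "q/2"] rho0 by simp
      finally show ?thesis .
    qed
    ultimately show ?thesis by simp
  qed
  have Bb: "((1+w0) powr q + (q/2-1)) / w0 powr q \<le> (1 + q/2) * (2*q) powr q"
  proof -
    have "w0 powr q = 1 / (2*q) powr q" unfolding w0_def using q2 by (simp add: powr_divide)
    then have "((1+w0) powr q + (q/2-1)) / w0 powr q = ((1+w0) powr q + (q/2-1)) * (2*q) powr q" by simp
    also have "\<dots> \<le> (1 + q/2) * (2*q) powr q" using B2 by (intro mult_right_mono) auto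
    finally show ?thesis .
  qed
  have cq: "c powr q \<le> 2/9 * (2/q)"
  proof -
    have c2: "c powr 2 = 2/9" unfolding c_def using powr_realpow[of "2/(3* sqrt 2)" 2] by (simp add: power2_eq_square)
    have ic: "1/c \<ge> 2"
    proof -
      have "sqrt 2 \<ge> (4/3::real)" by (rule real_le_rsqrt) (simp add: power2_eq_square)
      then show ?thesis unfolding c_def by simp
    qed
    have "(1/c) powr (q-2) \<ge> 1 + (q-2) * ln (1/c)" using c0 by (intro powr_ge_lin) auto
    moreover have "ln (1/c) \<ge> 1/2"
    proof -
      have "ln 2 \<le> ln (1/c)" using ic c0 by (subst ln_le_cancel_iff) auto
      then show ?thesis using ln2_half by simp
    qed
    moreover have "(q-2) * (1/2) \<le> (q-2) * ln (1/c)" using q2 calculation(2) by (intro mult_left_mono) auto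
    moreover have "(q-2) * (1/2) = q/2 - 1" by simp
    ultimately have "(1/c) powr (q-2) \<ge> q/2" by linarith
    then have "c powr (q-2) \<le> 2/q" using c0 q2 by (simp add: powr_divide field_simps)
    moreover have "c powr q = c powr 2 * c powr (q-2)" by (simp add: powr_add[symmetric])
    ultimately show ?thesis using c2 c0 by (simp add: mult_left_mono)
  qed
  have T2: "((1+w0) powr q + (q/2-1)) / w0 powr q * ((\<rho>\<^sup>2) powr (q/2) * r powr (q-2)) \<le> 4/9"
  proof -
    have "((1+w0) powr q + (q/2-1)) / w0 powr q * ((\<rho>\<^sup>2) powr (q/2) * r powr (q-2))
       \<le> ((1 + q/2) * (2*q) powr q) * (1/(3 * sqrt 2 * q)) powr q"
      using Bb K q2 by (intro mult_mono) auto
    also have "\<dots> = (1 + q/2) * (2*q * (1/(3 * sqrt 2 * q))) powr q" by (simp only: mult.assoc powr_mult)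
    also have "2*q * (1/(3 * sqrt 2 * q)) = c" unfolding c_def using q2 by simp
    also have "(1 + q/2) * c powr q \<le> (1 + q/2) * (2/9 * (2/q))" using cq q2 by (intro mult_left_mono) auto
    also have "\<dots> = 4/9 * (1/q + 1/2)" using q2 by (simp add: field_simps)
    also have "\<dots> \<le> 4/9 * (1/2 + 1/2)" using q2 by (intro mult_left_mono) (auto simp: field_simps)
    finally show ?thesis by simp
  qed
  show ?thesis unfolding Cq_def w0_def[symmetric] using T1 T2 by simp
qed


lemma case2:
  fixes q r \<rho> :: real
  assumes q2: "q \<ge> 2" and r1: "r \<ge> 1" and rho0: "0 < \<rho>" and rho1: "\<rho> \<le> ln q / (16 * r * q)"
  shows "Cq q (ln q / (4*q)) \<rho> r \<le> 1"
proof -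
  define w0 where "w0 = ln q / (4*q)"
  have lq: "ln q > 0" using q2 by simp
  have lq1: "ln q \<le> q - 1" using q2 by (intro ln_le_minus_one) auto
  have w0p: "w0 > 0" unfolding w0_def using lq q2 by simp
  have w0q: "w0 \<le> 1/4" unfolding w0_def using lq1 q2 by (simp add: field_simps)
  define Q where "Q = q powr (1/4)"
  have Q1: "Q \<ge> 1" unfolding Q_def using q2 by (intro ge_one_powr_ge_zero) auto
  have Q4: "Q ^ 4 = q" unfolding Q_def using q2 by (simp add: powr_power)
  have expQ: "exp (w0 * q) = Q" unfolding w0_def Q_def using q2 by (simp add: powr_def)
  have lnQ: "ln q \<le> 4 * Q"
  proof -
    have "ln Q = ln q / 4" unfolding Q_def using q2 by (simp add: ln_powr)
    moreover have "ln Q \<le> Q - 1" using Q1 by (intro ln_le_minus_one) auto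
    ultimately show ?thesis by simp
  qed
  have F: "max 1 ((1+(2*w0+w0\<^sup>2)) powr (q/2-2)) \<le> Q" using F_exp[OF q2, of w0] w0p expQ by simp
  have B: "(1+w0) powr q \<le> Q" using base_exp[of w0 q] w0p q2 expQ by simp
  have W2: "(2+w0)\<^sup>2 \<le> 81/16"
  proof -
    have "(2+w0)\<^sup>2 \<le> (2 + 1/4)\<^sup>2" using w0p w0q by (intro power_mono) auto
    then show ?thesis by (simp add: power2_eq_square)
  qed
  have rho2: "\<rho> \<le> ln q / (16 * q)"
  proof -
    have "ln q / (16 * r * q) \<le> ln q / (16 * q)" using r1 q2 lq by (intro divide_left_mono) auto
    then show ?thesis using rho1 by simp
  qed
  have Qp: "Q > 0" using Q1 by simp
  have rhosq: "\<rho>\<^sup>2 \<le> 1 / (16 * Q^6)"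
  proof -
    have "ln q / (16 * q) \<le> 4 * Q / (16 * q)" by (rule divide_right_mono[OF lnQ]) (use q2 in auto)
    then have "\<rho> \<le> 4 * Q / (16 * Q^4)" using rho2 Q4 by simp
    also have "4 * Q / (16 * Q^4) = 1 / (4 * Q^3)" using Qp by (simp add: field_simps power_eq_if)
    finally have "\<rho>\<^sup>2 \<le> (1 / (4 * Q^3))\<^sup>2" using rho0 by (intro power_mono) auto
    also have "\<dots> = 1 / (16 * Q^6)" by (simp add: power2_eq_square field_simps power_eq_if)
    finally show ?thesis .
  qed
  have T1: "\<rho>\<^sup>2 * (1 + (q/2 - 1) * max 1 ((1+(2*w0+w0\<^sup>2)) powr (q/2-2)) * (2+w0)\<^sup>2) \<le> 113/512"
  proof -
    define Z where "Z = (q/2 - 1) * max 1 ((1+(2*w0+w0\<^sup>2)) powr (q/2-2)) * (2+w0)\<^sup>2"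
    have "Z \<le> (Q^4/2) * Q * (81/16)"
      unfolding Z_def using q2 F W2 Q4 by (intro mult_mono) auto
    moreover have "(Q^4/2) * Q * (81/16) = 81/32 * Q^5" by (simp add: eval_nat_numeral)
    moreover have "1 \<le> Q^5" using Q1 by simp
    ultimately have "1 + Z \<le> 113/32 * Q^5" by linarith
    then have "1 + (q/2 - 1) * max 1 ((1+(2*w0+w0\<^sup>2)) powr (q/2-2)) * (2+w0)\<^sup>2 \<le> 113/32 * Q^5"
      unfolding Z_def by simp
    moreover have "0 \<le> 1 + (q/2 - 1) * max 1 ((1+(2*w0+w0\<^sup>2)) powr (q/2-2)) * (2+w0)\<^sup>2"
      using q2 by (intro add_nonneg_nonneg mult_nonneg_nonneg) auto
    ultimately
    have "\<rho>\<^sup>2 * (1 + (q/2 - 1) * max 1 ((1+(2*w0+w0\<^sup>2)) powr (q/2-2)) * (2+w0)\<^sup>2) \<le> 1 / (16 * Q^6) * (113/32 * Q^5)"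
      using rhosq Q1 by (intro mult_mono) auto
    also have "\<dots> = 113/512 / Q" using Qp by (simp add: field_simps power_eq_if)
    also have "\<dots> \<le> 113/512" using Q1 by (simp add: field_simps)
    finally show ?thesis .
  qed
  have K: "(\<rho>\<^sup>2) powr (q/2) * r powr (q-2) \<le> (w0/4) powr q"
  proof -
    have "(\<rho>\<^sup>2) powr (q/2) = \<rho> powr q" using sq_powr[of \<rho> "q/2"] rho0 by simp
    moreover have "r powr (q-2) \<le> r powr q" using r1 by (intro powr_mono) auto
    ultimately have "(\<rho>\<^sup>2) powr (q/2) * r powr (q-2) \<le> \<rho> powr q * r powr q" by (simp add: mult_left_mono)
    also have "\<dots> = (\<rho> * r) powr q" by (simp add: powr_mult)
    also have "\<dots> \<le> (w0/4) powr q"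
    proof (rule powr_mono2)
      have "\<rho> * r \<le> ln q / (16 * r * q) * r" using rho1 r1 by (intro mult_right_mono) auto
      also have "\<dots> = w0 / 4" unfolding w0_def using r1 by (simp add: field_simps)
      finally show "\<rho> * r \<le> w0 / 4" .
    qed (use q2 rho0 r1 in auto)
    finally show ?thesis .
  qed
  have four: "4 powr q \<ge> 8 * q"
  proof -
    have "(4::real) powr q = 4 powr (2 + (q - 2))" by simp
    also have "\<dots> = 4 powr 2 * 4 powr (q - 2)" by (rule powr_add)
    also have "(4::real) powr 2 = 16" using powr_realpow[of 4 2] by simp
    finally have e: "4 powr q = 16 * 4 powr (q - 2)" .
    have "4 powr (q - 2) \<ge> 1 + (q - 2) * ln 4" by (rule powr_ge_lin) simp
    moreover have "(q - 2) * 1 \<le> (q - 2) * ln 4" using q2 ln4_one by (intro mult_left_mono) auto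
    ultimately have "4 powr (q - 2) \<ge> q - 1" by simp
    then show ?thesis using e q2 by simp
  qed
  have T2: "((1+w0) powr q + (q/2-1)) / w0 powr q * ((\<rho>\<^sup>2) powr (q/2) * r powr (q-2)) \<le> 3/16"
  proof -
    have wqp: "w0 powr q > 0" using w0p by simp
    have "Q \<le> Q^4" using power_increasing[of 1 4 Q] Q1 by simp
    then have "(1+w0) powr q + (q/2-1) \<le> 3/2 * q" using B Q4 q2 by simp
    then have "((1+w0) powr q + (q/2-1)) / w0 powr q * ((\<rho>\<^sup>2) powr (q/2) * r powr (q-2))
        \<le> (3/2 * q) / w0 powr q * (w0/4) powr q"
      using K wqp q2 by (intro mult_mono divide_right_mono) auto
    also have "(w0/4) powr q = w0 powr q / 4 powr q" by (rule powr_divide)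
    also have "(3/2 * q) / w0 powr q * (w0 powr q / 4 powr q) = (3/2 * q) / 4 powr q" using wqp by simp
    also have "\<dots> \<le> (3/2 * q) / (8 * q)" using four q2 by (intro divide_left_mono) auto
    also have "\<dots> = 3/16" using q2 by simp
    finally show ?thesis .
  qed
  show ?thesis unfolding Cq_def w0_def[symmetric] using T1 T2 by simp
qed


lemma Hscal_from:
  fixes \<mu> :: "'a::finite \<Rightarrow> real"
  assumes mu: "fin_prob \<mu>" and p1: "p \<ge> 1" and w0: "w0 > 0" and r0: "\<rho> \<ge> 0"
    and sig: "(p + p*(p-1)*max 1 ((1+(2*w0+w0\<^sup>2)) powr (p-2))*(2+w0)\<^sup>2) * \<rho>\<^sup>2 \<le> p * \<sigma>\<^sup>2"
  shows "Hscal \<mu> p \<rho> \<sigma> (((1+w0) powr (2*p) + (p-1)) / w0 powr (2*p) * (\<rho>\<^sup>2) powr p)"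
  unfolding Hscal_def
proof (intro allI impI)
  fix s :: real and t cc :: "'a \<Rightarrow> real"
  assume s0: "0 \<le> s" and t0: "\<forall>z. 0 \<le> t z" and c0: "(\<Sum>z\<in>UNIV. \<mu> z * cc z) = 0" and cs: "\<forall>z. (cc z)\<^sup>2 \<le> s * t z"
  have m0: "\<And>a. \<mu> a \<ge> 0" and m1: "(\<Sum>a\<in>UNIV. \<mu> a) = 1" using mu unfolding fin_prob_def by auto
  show "(\<Sum>z\<in>UNIV. \<mu> z * (s + 2*\<rho>*cc z + \<rho>\<^sup>2 * t z) powr p) \<le> (s + \<sigma>\<^sup>2 * (\<Sum>z\<in>UNIV. \<mu> z * t z)) powr p + (((1+w0) powr (2*p) + (p-1)) / w0 powr (2*p) * (\<rho>\<^sup>2) powr p) * (\<Sum>z\<in>UNIV. \<mu> z * (t z powr p))"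
    by (rule Hsum[OF m0 m1 p1 w0 r0 s0 _ c0 _ sig]) (use t0 cs in auto)
qed

lemma main_cond:
  fixes \<mu> :: "'a::finite \<Rightarrow> real" and f :: "(nat \<Rightarrow> 'a) \<Rightarrow> real"
  assumes mu: "fin_prob \<mu>" and r0: "r > 0" and g0: "\<gamma> > 0" and q2: "q \<ge> 2"
    and glob: "L2_global \<mu> n r \<gamma> f" and rho0: "\<rho> \<ge> 0" and w0: "w0 > 0" and C: "Cq q w0 \<rho> r \<le> 1"
  shows "normq_pow \<mu> n q (T_op \<mu> n \<rho> f) \<le> (norm2_on \<mu> {..<n} f)\<^sup>2 * \<gamma> powr (q - 2)"
proof -
  define p where "p = q/2"
  have p1: "p \<ge> 1" using q2 by (simp add: p_def)
  have pq: "2 * p = q" by (simp add: p_def)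
  define F where "F = max 1 ((1+(2*w0+w0\<^sup>2)) powr (p-2))"
  define A where "A = p*(p-1)*F*(2+w0)\<^sup>2"
  define \<sigma> where "\<sigma> = sqrt ((p + A) * \<rho>\<^sup>2 / p)"
  have A0: "A \<ge> 0" using p1 by (simp add: A_def F_def)
  have sig2: "\<sigma>\<^sup>2 = (p + A) * \<rho>\<^sup>2 / p" unfolding \<sigma>_def using A0 p1 by simp
  have sig: "(p + A) * \<rho>\<^sup>2 \<le> p * \<sigma>\<^sup>2" using sig2 p1 by simp
  define \<beta> where "\<beta> = ((1+w0) powr (2*p) + (p-1)) / w0 powr (2*p) * (\<rho>\<^sup>2) powr p"
  have H: "Hscal \<mu> p \<rho> \<sigma> \<beta>" unfolding \<beta>_def
    by (rule Hscal_from[OF mu p1 w0 rho0]) (use sig in \<open>simp add: A_def F_def\<close>)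
  have b0: "\<beta> \<ge> 0" using p1 w0 unfolding \<beta>_def
    by (intro mult_nonneg_nonneg divide_nonneg_nonneg add_nonneg_nonneg) auto
  have "\<sigma>\<^sup>2 = \<rho>\<^sup>2 * (1 + (p - 1) * F * (2+w0)\<^sup>2)"
    unfolding sig2 A_def using p1 by (simp add: field_simps)
  then have "\<sigma>\<^sup>2 + \<beta> * r powr (q - 2) = Cq q w0 \<rho> r"
    unfolding Cq_def \<beta>_def F_def pq by (simp add: p_def)
  then have sb: "\<sigma>\<^sup>2 + \<beta> * r powr (q - 2) \<le> 1" using C by simp
  show ?thesis using final_param[OF mu r0 g0 q2 glob _ b0 sb] H by (simp add: p_def)
qed

theorem mainTheorem10:
  fixes \<mu> :: "'a::finite \<Rightarrow> real" and n :: nat and r \<gamma> q \<rho> :: real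
    and f :: "(nat \<Rightarrow> 'a) \<Rightarrow> real"
  assumes "fin_prob \<mu>"
    and "r > 0" and "\<gamma> > 0" and "q \<ge> 2"
    and "L2_global \<mu> n r \<gamma> f"
    and "(0 < \<rho> \<and> \<rho> \<le> 1 / (3 * sqrt 2) * min (1 / (r powr ((q - 2) / q) * q)) (1 / sqrt q))
         \<or> (r \<ge> 1 \<and> 0 < \<rho> \<and> \<rho> \<le> ln q / (16 * r * q))"
  shows "normq_pow \<mu> n q (T_op \<mu> n \<rho> f) \<le> (norm2_on \<mu> {..<n} f)\<^sup>2 * \<gamma> powr (q - 2)"
  using assms(6)
proof
  assume h: "0 < \<rho> \<and> \<rho> \<le> 1 / (3 * sqrt 2) * min (1 / (r powr ((q - 2) / q) * q)) (1 / sqrt q)"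
  have C: "Cq q (1/(2*q)) \<rho> r \<le> 1" using case1[OF assms(4) assms(2)] h by blast
  have w: "(0::real) < 1/(2*q)" using assms(4) by simp
  have r: "\<rho> \<ge> 0" using h by simp
  show ?thesis by (rule main_cond[OF assms(1-5) r w C])
next
  assume h: "r \<ge> 1 \<and> 0 < \<rho> \<and> \<rho> \<le> ln q / (16 * r * q)"
  have C: "Cq q (ln q / (4*q)) \<rho> r \<le> 1" using case2[OF assms(4)] h by blast
  have w: "0 < ln q / (4*q)" using assms(4) by simp
  have r: "\<rho> \<ge> 0" using h by simp
  show ?thesis by (rule main_cond[OF assms(1-5) r w C])
qed


end
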